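(* Consider the equations $$M=m\,\frac{\int_{\mathcal B((\tilde x,y),R)}\lambda e^{-\lambda r}\,dx\,dr}{\int_{D\setminus\mathcal B((\tilde x,y),R)}\lambda e^{-\lambda r}\,dx\,dr}\qquad(\ast)$$ and $$\frac{dmg}{2\lambda}+mg\,\frac{\int_{D\setminus\mathcal B((\tilde x,y),R)}r\lambda e^{-\lambda r}\,dx\,dr}{\int_{D\setminus\mathcal B((\tilde x,y),R)}\lambda e^{-\lambda r}\,dx\,dr}+Mgy=E\qquad(\ast\ast)$$ in the unknowns $y\ge R$ and $\lambda>0$. (i) There exists a unique $\lambda_*>0$ such that $(\ast\ast)$ holds with $y=R$. (ii) Suppose that $$M<m\,\frac{\int_{\mathcal B((\tilde x,R),R)}\lambda_* e^{-\lambda_* r}\,dx\,dr}{\int_{D\setminus\mathcal B((\tilde x,R),R)}\lambda_* e^{-\lambda_* r}\,dx\,dr}.$$ Then $(\ast)$–$(\ast\ast)$ have a unique solution $(y_A,\lambda_A)$, and $R<y_A<E/(Mg)$.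
   Context: Fix an integer $d\ge 2$, a bounded domain $D_b\subset\mathbb R^{d-1}$ with smooth boundary, and $R>0$. Assume that $D_b$ satisfies the inner ball condition with radius $R$: for every $x\in\partial D_b$ there is a unique open $(d-1)$-dimensional ball of radius $R$ contained in $D_b$ whose boundary is tangent to $\partial D_b$ at $x$, and $x$ is the only point of intersection of that ball's boundary with $\partial D_b$. Let $D=D_b\times[0,\infty)\subset\mathbb R^d$, and assume a closed ball of radius $R$ fits in the interior of $D$. Points of $\mathbb R^d$ are written $(x,y)$ with $x\in\mathbb R^{d-1}$ and $y\in\mathbb R$. $\mathcal B(z,r)$ denotes the open ball with center $z$ and radius $r$. Let $D_b'=\{x\in D_b:\mathcal B((x,y),R)\subset D\text{ for all }y>R\}$. In integrals of the form $\int_{D\setminus\mathcal B((\tilde x,y),R)}(\cdot)\,dx\,dr$ (and similarly over $\mathcal B((\tilde x,y),R)$): - $\tilde x$ is an arbitrary point of $D_b'$, and the value of the integral does not depend on this choice; - $dx$ is Lebesgue measure on $\mathbb R^{d-1}$ and $dr$ is Lebesgue measure in the vertical coordinate. Fix $m>0$, $M>0$, $g>0$ and $E>MgR$. *)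

theory Defs
  imports "HOL-Analysis.Analysis"
begin

fun Ck_on :: "nat \<Rightarrow> 'a::euclidean_space set \<Rightarrow> ('a \<Rightarrow> real) \<Rightarrow> bool" where
  "Ck_on 0 U f = continuous_on U f"
| "Ck_on (Suc k) U f = (f differentiable_on U \<and>
      (\<forall>b\<in>Basis. Ck_on k U (\<lambda>x. frechet_derivative f (at x) b)))"

definition smooth_on :: "'a::euclidean_space set \<Rightarrow> ('a \<Rightarrow> real) \<Rightarrow> bool" where
  "smooth_on U f = (\<forall>k. Ck_on k U f)"

definition smooth_boundary :: "'a::euclidean_space set \<Rightarrow> bool" where
  "smooth_boundary S = (\<forall>p\<in>frontier S. \<exists>\<epsilon>>0. \<exists>\<phi>. smooth_on (ball p \<epsilon>) \<phi> \<and>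
      frechet_derivative \<phi> (at p) \<noteq> (\<lambda>v. 0) \<and>
      S \<inter> ball p \<epsilon> = {z\<in>ball p \<epsilon>. \<phi> z < 0})"

definition smooth_bounded_domain :: "'a::euclidean_space set \<Rightarrow> bool" where
  "smooth_bounded_domain S = (open S \<and> connected S \<and> S \<noteq> {} \<and> bounded S \<and> smooth_boundary S)"

definition inner_ball_condition :: "'a::euclidean_space set \<Rightarrow> real \<Rightarrow> bool" where
  "inner_ball_condition S R = (\<forall>x\<in>frontier S.
      (\<exists>!c. ball c R \<subseteq> S \<and> x \<in> sphere c R) \<and>
      (\<forall>c. ball c R \<subseteq> S \<and> x \<in> sphere c R \<longrightarrow> sphere c R \<inter> frontier S = {x}))"

definition cyl :: "'a::euclidean_space set \<Rightarrow> ('a \<times> real) set" where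
  "cyl Db = Db \<times> {0..}"

definition Db_prime :: "'a::euclidean_space set \<Rightarrow> real \<Rightarrow> 'a set" where
  "Db_prime Db R = {x\<in>Db. \<forall>y>R. ball (x, y) R \<subseteq> cyl Db}"

text \<open>The integrals appearing in the equations (Lebesgue measure on R^{d-1} \<times> R;
  the second coordinate is the vertical coordinate r).\<close>
definition int_in :: "'a::euclidean_space set \<Rightarrow> real \<Rightarrow> 'a \<Rightarrow> real \<Rightarrow> real \<Rightarrow> real" where
  "int_in Db R xt y l = (LINT z : ball (xt, y) R | lborel. l * exp (- l * snd z))"

definition int_out :: "'a::euclidean_space set \<Rightarrow> real \<Rightarrow> 'a \<Rightarrow> real \<Rightarrow> real \<Rightarrow> real" where
  "int_out Db R xt y l = (LINT z : cyl Db - ball (xt, y) R | lborel. l * exp (- l * snd z))"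

definition rint_out :: "'a::euclidean_space set \<Rightarrow> real \<Rightarrow> 'a \<Rightarrow> real \<Rightarrow> real \<Rightarrow> real" where
  "rint_out Db R xt y l = (LINT z : cyl Db - ball (xt, y) R | lborel. snd z * (l * exp (- l * snd z)))"

definition eq_star :: "'a::euclidean_space set \<Rightarrow> real \<Rightarrow> 'a \<Rightarrow> real \<Rightarrow> real \<Rightarrow> real \<Rightarrow> real \<Rightarrow> bool" where
  "eq_star Db R xt m M y l = (M = m * (int_in Db R xt y l / int_out Db R xt y l))"

definition eq_2star :: "'a::euclidean_space set \<Rightarrow> real \<Rightarrow> 'a \<Rightarrow> real \<Rightarrow> real \<Rightarrow> real \<Rightarrow> real \<Rightarrow> real \<Rightarrow> real \<Rightarrow> bool" where
  "eq_2star Db R xt m M g E y l =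
     (real (DIM('a) + 1) * m * g / (2 * l)
      + m * g * (rint_out Db R xt y l / int_out Db R xt y l) + M * g * y = E)"

end

theory Submission
  imports Defs "HOL-Probability.Distributions"
begin

locale absS =
  fixes A R m M g E d :: real and P Q :: "real \<Rightarrow> real"
  assumes Apos: "A > 0" and Rpos: "R > 0" and mpos: "m > 0" and Mpos: "M > 0"
    and gpos: "g > 0" and dpos: "d > 0" and EMR: "E > M*g*R"
    and Ppos: "\<And>l. l > 0 \<Longrightarrow> P l > 0"
    and contP: "continuous_on {0<..} P" and contQ: "continuous_on {0<..} Q"
    and h1: "\<And>l y. l > 0 \<Longrightarrow> y \<ge> R \<Longrightarrow> exp(-l*y) * P l < A"
    and h2: "\<And>l. l > 0 \<Longrightarrow> R * P l + Q l > 0"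
    and h3: "\<And>\<epsilon>. \<epsilon> > 0 \<Longrightarrow> \<exists>L>0. \<forall>l\<ge>L. exp(-l*R) * P l < \<epsilon>"
    and h4: "\<And>y l1 l2. y \<ge> R \<Longrightarrow> 0 < l1 \<Longrightarrow> l1 < l2 \<Longrightarrow>
       (A/l2 - exp(-l2*y)*(y*P l2 + Q l2)) * (A - exp(-l1*y)*P l1)
       \<le> (A/l1 - exp(-l1*y)*(y*P l1 + Q l1)) * (A - exp(-l2*y)*P l2)"
    and h5: "\<And>l1 l2. 0 < l1 \<Longrightarrow> l1 \<le> l2 \<Longrightarrow> l1*(R + Q l1/P l1) \<le> l2*(R + Q l2/P l2)"
    and h6: "\<And>l y. l > 0 \<Longrightarrow> y \<ge> R \<Longrightarrow> exp(-l*y)*(y*P l + Q l) \<le> A/l"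
begin

definition Zi where "Zi y l = exp(-l*y) * P l"
definition Zo where "Zo y l = A - exp(-l*y) * P l"
definition No where "No y l = A/l - exp(-l*y)*(y*P l + Q l)"
definition G where "G y l = d*m*g/(2*l) + m*g*(No y l / Zo y l) + M*g*y"

lemma Zo_pos: "l > 0 \<Longrightarrow> y \<ge> R \<Longrightarrow> Zo y l > 0"
  using h1[of l y] by (simp add: Zo_def)

lemma No_nonneg: "l > 0 \<Longrightarrow> y \<ge> R \<Longrightarrow> No y l \<ge> 0"
  using h6[of l y] by (simp add: No_def)

lemma ratio_nonneg: "l > 0 \<Longrightarrow> y \<ge> R \<Longrightarrow> No y l / Zo y l \<ge> 0"
  by (intro divide_nonneg_pos No_nonneg Zo_pos)

lemma G_strict: assumes "y \<ge> R" "0 < l1" "l1 < l2" shows "G y l2 < G y l1"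
proof -
  have z1: "Zo y l1 > 0" and z2: "Zo y l2 > 0" using Zo_pos assms by auto
  have "No y l2 * Zo y l1 \<le> No y l1 * Zo y l2" using h4[OF assms] by (simp add: No_def Zo_def)
  hence r: "No y l2 / Zo y l2 \<le> No y l1 / Zo y l1" using z1 z2 by (simp add: divide_simps mult.commute)
  have "d*m*g/(2*l2) < d*m*g/(2*l1)" using assms dpos mpos gpos
    by (intro divide_strict_left_mono) auto
  moreover have "m*g*(No y l2 / Zo y l2) \<le> m*g*(No y l1 / Zo y l1)"
    using r mpos gpos by (intro mult_left_mono) auto
  ultimately show ?thesis unfolding G_def by linarith
qed

lemma G_cont: assumes "y \<ge> R" shows "continuous_on {0<..} (G y)"
proof -
  have "continuous_on {0<..} (\<lambda>l. d*m*g/(2*l) + m*g*((A/l - exp(-l*y)*(y*P l + Q l)) / (A - exp(-l*y) * P l)) + M*g*y)"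
    using Zo_pos[OF _ assms] by (intro continuous_intros contP contQ) (auto simp: Zo_def)
  thus ?thesis unfolding G_def No_def Zo_def by (simp add: fun_eq_iff)
qed

lemma G_lower: "l > 0 \<Longrightarrow> y \<ge> R \<Longrightarrow> G y l \<ge> d*m*g/(2*l) + M*g*y"
proof -
  assume a: "l > 0" "y \<ge> R"
  have "0 \<le> m*g*(No y l / Zo y l)" using ratio_nonneg[OF a] mpos gpos by (intro mult_nonneg_nonneg) auto
  thus ?thesis unfolding G_def by linarith
qed

lemma No_upper: "l > 0 \<Longrightarrow> y \<ge> R \<Longrightarrow> No y l \<le> A/l"
proof -
  assume l: "l > 0" and y: "y \<ge> R"
  have "y * P l + Q l \<ge> R * P l + Q l" using Ppos[OF l] y by (simp add: mult_right_mono)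
  hence "y * P l + Q l \<ge> 0" using h2[OF l] by linarith
  thus ?thesis unfolding No_def by simp
qed

lemma G_large: assumes "y \<ge> R" "M*g*y < E" shows "\<exists>L>0. \<forall>l\<ge>L. G y l < E"
proof -
  obtain L0 where L0: "L0 > 0" "\<forall>l\<ge>L0. exp(-l*R) * P l < A/2" using h3[of "A/2"] Apos by auto
  define K where "K = d*m*g/2 + 2*m*g"
  have Kp: "K > 0" using dpos mpos gpos by (auto simp: K_def intro!: add_pos_pos mult_pos_pos)
  define L where "L = max L0 (K/(E - M*g*y) + 1)"
  have "L > 0" using L0 by (simp add: L_def)
  moreover have "G y l < E" if l: "l \<ge> L" for l
  proof -
    have lp: "l > 0" using l L0 by (simp add: L_def)
    have "exp(-l*y) \<le> exp(-l*R)" using assms lp by simp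
    hence "exp(-l*y) * P l \<le> exp(-l*R) * P l" using Ppos[OF lp] by (simp add: mult_right_mono)
    also have "... < A/2" using L0 l by (simp add: L_def)
    finally have "Zo y l \<ge> A/2" by (simp add: Zo_def)
    hence "No y l / Zo y l \<le> (A/l) / (A/2)"
      using No_upper[OF lp assms(1)] No_nonneg[OF lp assms(1)] Apos
      by (intro frac_le) auto
    also have "... = 2/l" using Apos by (simp add: field_simps)
    finally have r: "No y l / Zo y l \<le> 2/l" .
    have "m*g*(No y l / Zo y l) \<le> m*g*(2/l)" using r mpos gpos by (intro mult_left_mono) auto
    hence "G y l \<le> d*m*g/(2*l) + m*g*(2/l) + M*g*y" unfolding G_def by linarith
    also have "d*m*g/(2*l) + m*g*(2/l) = K / l" using lp by (simp add: K_def field_simps)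
    also have "K / l < E - M*g*y"
    proof -
      have "l > K/(E - M*g*y)" using l by (simp add: L_def)
      thus ?thesis using assms lp by (simp add: field_simps)
    qed
    finally show ?thesis by simp
  qed
  ultimately show ?thesis by blast
qed

lemma G_unique_root: assumes "y \<ge> R" "M*g*y < E" shows "\<exists>!l. l > 0 \<and> G y l = E"
proof -
  define l0 where "l0 = d*m*g/(2*E)"
  have Ep: "E > 0" using EMR Mpos gpos Rpos by (smt (verit) mult_pos_pos)
  have l0p: "l0 > 0" using dpos mpos gpos Ep by (simp add: l0_def)
  have "d*m*g/(2*l0) = E" using Ep dpos mpos gpos by (simp add: l0_def field_simps)
  moreover have "M*g*y > 0" using Mpos gpos assms Rpos by simp
  ultimately have g0: "G y l0 > E" using G_lower[OF l0p assms(1)] by linarith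
  obtain L where L: "L > 0" "\<forall>l\<ge>L. G y l < E" using G_large[OF assms] by auto
  define l1 where "l1 = max L l0"
  have g1: "G y l1 < E" using L by (simp add: l1_def)
  have "l0 \<le> l1" by (simp add: l1_def)
  moreover have "continuous_on {l0..l1} (G y)"
    by (rule continuous_on_subset[OF G_cont[OF assms(1)]]) (use l0p in auto)
  ultimately obtain l where "l0 \<le> l" "l \<le> l1" "G y l = E"
    using IVT2'[of "G y" l1 E l0] g0 g1 by auto
  hence ex: "l > 0 \<and> G y l = E" using l0p by auto
  show ?thesis
  proof (rule ex1I[of _ l])
    show "l > 0 \<and> G y l = E" by fact
    fix l' assume l': "l' > 0 \<and> G y l' = E"
    show "l' = l"
    proof (rule ccontr)
      assume "l' \<noteq> l"
      then consider "l' < l" | "l < l'" by linarith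
      thus False using G_strict[OF assms(1)] ex l' by cases force+
    qed
  qed
qed

definition lam where "lam y = (THE l. l > 0 \<and> G y l = E)"

lemma lam: assumes "y \<ge> R" "M*g*y < E" shows "lam y > 0" "G y (lam y) = E"
  using theI'[OF G_unique_root[OF assms]] unfolding lam_def by auto

lemma lam_eq: assumes "y \<ge> R" "M*g*y < E" "l > 0" "G y l = E" shows "lam y = l"
  using G_unique_root[OF assms(1,2)] lam[OF assms(1,2)] assms(3,4) by blast

lemma G_cont_y: assumes "l > 0" "y0 \<ge> R" shows "isCont (\<lambda>y. G y l) y0"
proof -
  have "Zo y0 l \<noteq> 0" using Zo_pos[OF assms] by simp
  hence "isCont (\<lambda>y. d*m*g/(2*l) + m*g*((A/l - exp(-l*y)*(y*P l + Q l)) / (A - exp(-l*y) * P l)) + M*g*y) y0"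
    by (intro continuous_intros) (auto simp: Zo_def)
  thus ?thesis unfolding G_def No_def Zo_def .
qed

lemma lam_cont: assumes y1: "R \<le> y1" "M*g*y1 < E" shows "continuous_on {R..y1} lam"
  unfolding continuous_on_def
proof (intro ballI)
  fix y0 assume y0: "y0 \<in> {R..y1}"
  have yR: "R \<le> y0" using y0 by auto
  have yE: "M*g*y0 < E"
  proof -
    have "M*g*y0 \<le> M*g*y1" using y0 Mpos gpos by (intro mult_left_mono) auto
    thus ?thesis using y1 by linarith
  qed
  define l0 where "l0 = lam y0"
  have l0: "l0 > 0" "G y0 l0 = E" using lam[OF yR yE] by (auto simp: l0_def)
  let ?F = "at y0 within {R..y1}"
  show "(lam \<longlongrightarrow> lam y0) ?F"
  proof (rule tendstoI)
    fix e :: real assume ep: "e > 0"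
    define e' where "e' = min e (l0/2)"
    have e'p: "e' > 0" "e' \<le> e" "e' \<le> l0/2" using ep l0 by (auto simp: e'_def)
    have lap: "l0 - e' > 0" using e'p l0 by linarith
    have Ga: "G y0 (l0 - e') > E" using G_strict[OF yR lap, of l0] e'p l0 by auto
    have Gb: "G y0 (l0 + e') < E" using G_strict[OF yR l0(1), of "l0+e'"] e'p l0 by auto
    have ca: "((\<lambda>y. G y (l0-e')) \<longlongrightarrow> G y0 (l0-e')) ?F"
      using tendsto_within_subset[OF G_cont_y[OF lap yR, unfolded isCont_def] subset_UNIV] .
    have cb: "((\<lambda>y. G y (l0+e')) \<longlongrightarrow> G y0 (l0+e')) ?F"
      using tendsto_within_subset[OF G_cont_y[of "l0+e'" y0, unfolded isCont_def] subset_UNIV] yR e'p l0 by auto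
    have ev1: "eventually (\<lambda>y. E < G y (l0-e')) ?F" using order_tendstoD(1)[OF ca Ga] .
    have ev2: "eventually (\<lambda>y. G y (l0+e') < E) ?F" using order_tendstoD(2)[OF cb Gb] .
    have ev3: "eventually (\<lambda>y. y \<in> {R..y1}) ?F" by (simp add: eventually_at_filter)
    show "eventually (\<lambda>y. dist (lam y) (lam y0) < e) ?F"
      using ev1 ev2 ev3
    proof eventually_elim
      case (elim y)
      have yR': "R \<le> y" using elim by auto
      have yE': "M*g*y < E"
      proof -
        have "M*g*y \<le> M*g*y1" using elim Mpos gpos by (intro mult_left_mono) auto
        thus ?thesis using y1 by linarith
      qed
      note ly = lam[OF yR' yE']
      have "lam y > l0 - e'"
      proof (rule ccontr)
        assume "\<not> lam y > l0 - e'"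
        hence "lam y < l0 - e' \<or> lam y = l0 - e'" by linarith
        thus False
        proof
          assume "lam y < l0 - e'"
          hence "G y (l0 - e') < G y (lam y)" using G_strict[OF yR' ly(1)] by auto
          thus False using ly elim by auto
        next
          assume "lam y = l0 - e'" thus False using ly elim by auto
        qed
      qed
      moreover have "lam y < l0 + e'"
      proof (rule ccontr)
        assume "\<not> lam y < l0 + e'"
        hence "lam y > l0 + e' \<or> lam y = l0 + e'" by linarith
        thus False
        proof
          assume "lam y > l0 + e'"
          hence "G y (lam y) < G y (l0 + e')" using G_strict[OF yR', of "l0+e'"] lap e'p by auto
          thus False using ly elim by auto
        next
          assume "lam y = l0 + e'" thus False using ly elim by auto
        qed
      qed
      ultimately show ?case using e'p by (simp add: dist_real_def l0_def abs_less_iff)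
    qed
  qed
qed


definition c0 where "c0 = A*M/(m+M)"
definition Fn where "Fn l = d*m*g/(2*l) + (m+M)*g/l - M*g*(Q l / P l)"

lemma star_iff: assumes "R \<le> y" "l > 0" shows "M = m*(Zi y l / Zo y l) \<longleftrightarrow> Zi y l = c0"
proof -
  have z: "Zo y l > 0" using Zo_pos assms by auto
  have zz: "Zo y l = A - Zi y l" by (simp add: Zo_def Zi_def)
  have "M = m*(Zi y l / Zo y l) \<longleftrightarrow> M * Zo y l = m * Zi y l" using z by (simp add: divide_simps)
  also have "... \<longleftrightarrow> (m+M) * Zi y l = A*M" unfolding zz by (auto simp: algebra_simps)
  also have "... \<longleftrightarrow> Zi y l = c0" using mpos Mpos unfolding c0_def by (auto simp: field_simps)
  finally show ?thesis .
qed

lemma G_Fn: assumes "R \<le> y" "l > 0" "Zi y l = c0" shows "G y l = Fn l"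
proof -
  have Pp: "P l > 0" using Ppos assms by auto
  have ex: "exp(-l*y) = c0 / P l" using assms(3) Pp by (simp add: Zi_def field_simps)
  have Zo: "Zo y l = A*m/(m+M)" using assms(3) mpos Mpos unfolding Zo_def Zi_def c0_def by (simp add: field_simps)
  have No: "No y l = A/l - c0*y - c0 * (Q l / P l)" unfolding No_def ex using Pp by (simp add: field_simps)
  define q where "q = Q l / P l"
  have No': "No y l = A/l - c0*y - c0*q" using No by (simp add: q_def)
  have "No y l / Zo y l = (m+M)/(A*m) * No y l" using Apos mpos Mpos by (simp add: Zo field_simps)
  also have "... = (m+M)/(A*m) * (A/l - c0*y - c0*q)" using No' by simp
  also have "... = (m+M)/(A*m)*(A/l) - ((m+M)/(A*m)*c0)*(y+q)" using Apos mpos assms(2) by (simp add: field_simps)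
  also have "(m+M)/(A*m)*c0 = M/m" using Apos mpos Mpos unfolding c0_def
    by (simp add: field_simps add_pos_pos[THEN less_imp_neq, THEN not_sym])
  also have "(m+M)/(A*m)*(A/l) = (m+M)/(m*l)" using Apos by simp
  finally have r: "No y l / Zo y l = (m+M)/(m*l) - M/m*(y+q)" .
  have "m*g*(No y l / Zo y l) = (m+M)*g/l - M*g*y - M*g*(Q l/P l)"
    unfolding r q_def using mpos assms(2) by (simp add: field_simps)
  thus ?thesis unfolding G_def Fn_def by simp
qed

lemma Fn_inj: assumes "0 < l1" "l1 < l2" "Fn l1 = E" "Fn l2 = E" shows False
proof -
  define K where "K = d*m*g/2 + (m+M)*g"
  have H: "\<And>l. l > 0 \<Longrightarrow> (Fn l - M*g*R) * l = K - M*g*(l*(R + Q l / P l))"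
    unfolding Fn_def K_def by (simp add: field_simps)
  have h: "l1*(R + Q l1/P l1) \<le> l2*(R + Q l2/P l2)" using h5 assms by auto
  have a1: "(E - M*g*R) * l1 = K - M*g*(l1*(R + Q l1 / P l1))" using H[of l1] assms by simp
  have a2: "(E - M*g*R) * l2 = K - M*g*(l2*(R + Q l2 / P l2))" using H[of l2] assms by simp
  have "M*g*(l1*(R + Q l1/P l1)) \<le> M*g*(l2*(R + Q l2/P l2))" using h Mpos gpos by (intro mult_left_mono) auto
  hence "(E - M*g*R) * l2 \<le> (E - M*g*R) * l1" using a1 a2 by linarith
  moreover have "(E - M*g*R) * l1 < (E - M*g*R) * l2" using EMR assms by (intro mult_strict_left_mono) auto
  ultimately show False by linarith
qed

theorem abs_main:
  shows "(\<exists>!l. l > 0 \<and> G R l = E) \<and>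
   (\<forall>ls. ls > 0 \<and> G R ls = E \<and> M < m*(Zi R ls / Zo R ls) \<longrightarrow>
     (\<exists>!p::real\<times>real. R \<le> fst p \<and> snd p > 0 \<and> M = m*(Zi (fst p) (snd p) / Zo (fst p) (snd p)) \<and> G (fst p) (snd p) = E) \<and>
     (\<forall>y l. R \<le> y \<and> l > 0 \<and> M = m*(Zi y l / Zo y l) \<and> G y l = E \<longrightarrow> R < y \<and> y < E/(M*g)))"
proof -
  have RR: "R \<le> R" by simp
  have EMR': "M*g*R < E" using EMR .
  have part1: "\<exists>!l. l > 0 \<and> G R l = E" using G_unique_root[OF RR EMR'] .
  have bounds: "R < y \<and> y < E/(M*g)"
    if ls: "ls > 0" "G R ls = E" "M < m*(Zi R ls / Zo R ls)"
    and sol: "R \<le> y" "l > 0" "M = m*(Zi y l / Zo y l)" "G y l = E" for ls y l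
  proof
    show "R < y"
    proof (rule ccontr)
      assume "\<not> R < y" hence yR: "y = R" using sol by auto
      have "l = ls" using lam_eq[OF RR EMR' sol(2)] lam_eq[OF RR EMR' ls(1,2)] sol(4) yR by simp
      thus False using ls sol yR by simp
    qed
    have "G y l \<ge> d*m*g/(2*l) + M*g*y" using G_lower sol by auto
    moreover have "d*m*g/(2*l) > 0" using dpos mpos gpos sol by simp
    ultimately have "M*g*y < E" using sol by linarith
    thus "y < E/(M*g)" using Mpos gpos by (simp add: field_simps)
  qed
  have part2: "\<exists>!p::real\<times>real. R \<le> fst p \<and> snd p > 0 \<and> M = m*(Zi (fst p) (snd p) / Zo (fst p) (snd p)) \<and> G (fst p) (snd p) = E"
    if ls: "ls > 0" "G R ls = E" "M < m*(Zi R ls / Zo R ls)" for ls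
  proof -
    have lsR: "lam R = ls" using lam_eq[OF RR EMR' ls(1,2)] .
    have DR: "Zi R ls > c0"
    proof -
      have z: "Zo R ls > 0" using Zo_pos ls by auto
      have "M * Zo R ls < m * Zi R ls" using ls(3) z by (simp add: field_simps)
      thus ?thesis unfolding c0_def using mpos Mpos by (simp add: Zo_def Zi_def field_simps)
    qed
    have c0p: "c0 > 0" using Apos mpos Mpos by (simp add: c0_def)
    obtain L where L: "L > 0" "\<forall>l\<ge>L. exp(-l*R) * P l < c0" using h3[OF c0p] by auto
    define y1 where "y1 = max R (E/(M*g) - d*m/(2*M*L))"
    have y1R: "R \<le> y1" by (simp add: y1_def)
    have y1E: "M*g*y1 < E"
    proof -
      have "E/(M*g) - d*m/(2*M*L) < E/(M*g)" using dpos mpos Mpos L by simp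
      moreover have "R < E/(M*g)" using EMR Mpos gpos by (simp add: field_simps)
      ultimately have "y1 < E/(M*g)" by (simp add: y1_def)
      thus ?thesis using Mpos gpos by (simp add: field_simps)
    qed
    note l1 = lam[OF y1R y1E]
    have "lam y1 \<ge> L"
    proof -
      have "G y1 (lam y1) \<ge> d*m*g/(2*lam y1) + M*g*y1" using G_lower[OF l1(1) y1R] .
      hence a: "d*m*g/(2*lam y1) \<le> E - M*g*y1" using l1 by linarith
      have "E - M*g*y1 \<le> E - M*g*(E/(M*g) - d*m/(2*M*L))"
        using Mpos gpos by (intro diff_left_mono mult_left_mono) (auto simp: y1_def)
      also have "... = d*m*g/(2*L)" using Mpos gpos L by (simp add: field_simps)
      finally have "d*m*g/(2*lam y1) \<le> d*m*g/(2*L)" using a by linarith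
      thus ?thesis using l1 L dpos mpos gpos by (simp add: field_simps)
    qed
    hence "exp(-lam y1*R) * P (lam y1) < c0" using L by auto
    moreover have "exp(-lam y1*y1) * P (lam y1) \<le> exp(-lam y1*R) * P (lam y1)"
      using l1 y1R Ppos[OF l1(1)] by (intro mult_right_mono) auto
    ultimately have Dy1: "Zi y1 (lam y1) \<le> c0" unfolding Zi_def by linarith
    have cont: "continuous_on {R..y1} (\<lambda>y. Zi y (lam y))"
    proof -
      have lc: "continuous_on {R..y1} lam" using lam_cont[OF y1R y1E] .
      have pos: "lam ` {R..y1} \<subseteq> {0<..}"
      proof
        fix z assume "z \<in> lam ` {R..y1}"
        then obtain y where y: "y \<in> {R..y1}" "z = lam y" by auto
        have "M*g*y \<le> M*g*y1" using y Mpos gpos by (intro mult_left_mono) auto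
        hence "M*g*y < E" using y1E by linarith
        thus "z \<in> {0<..}" using lam(1)[of y] y by auto
      qed
      have "continuous_on {R..y1} (\<lambda>y. exp(-lam y * y) * P (lam y))"
        by (intro continuous_intros lc continuous_on_compose2[OF contP lc pos])
      thus ?thesis unfolding Zi_def .
    qed
    obtain y where y: "R \<le> y" "y \<le> y1" "Zi y (lam y) = c0"
      using IVT2'[of "\<lambda>y. Zi y (lam y)" y1 c0 R, OF Dy1 _ y1R cont] DR lsR by auto
    have yE: "M*g*y < E"
    proof -
      have "M*g*y \<le> M*g*y1" using y Mpos gpos by (intro mult_left_mono) auto
      thus ?thesis using y1E by linarith
    qed
    note ly = lam[OF y(1) yE]
    show ?thesis
    proof (rule ex1I[of _ "(y, lam y)"])
      show "R \<le> fst (y, lam y) \<and> snd (y, lam y) > 0 \<and> M = m*(Zi (fst (y, lam y)) (snd (y, lam y)) / Zo (fst (y, lam y)) (snd (y, lam y))) \<and> G (fst (y, lam y)) (snd (y, lam y)) = E"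
        using y ly star_iff[OF y(1) ly(1)] by auto
    next
      fix p :: "real\<times>real"
      assume p: "R \<le> fst p \<and> snd p > 0 \<and> M = m*(Zi (fst p) (snd p) / Zo (fst p) (snd p)) \<and> G (fst p) (snd p) = E"
      obtain y' l' where p': "p = (y', l')" by (cases p)
      have s': "R \<le> y'" "l' > 0" "Zi y' l' = c0" "G y' l' = E" using p p' star_iff by auto
      have s: "Zi y (lam y) = c0" "G y (lam y) = E" using y ly by auto
      have F1: "Fn l' = E" using G_Fn[OF s'(1,2,3)] s'(4) by simp
      have F2: "Fn (lam y) = E" using G_Fn[OF y(1) ly(1) s(1)] s(2) by simp
      have ll: "l' = lam y"
      proof (rule ccontr)
        assume "l' \<noteq> lam y"
        then consider "l' < lam y" | "lam y < l'" by linarith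
        thus False
        proof cases
          case 1 show False using Fn_inj[OF s'(2) 1 F1 F2] .
        next
          case 2 show False using Fn_inj[OF ly(1) 2 F2 F1] .
        qed
      qed
      have "exp(-l'*y') * P l' = exp(-l'*y) * P l'" using s'(3) s(1) ll unfolding Zi_def by simp
      hence "exp(-l'*y') = exp(-l'*y)" using Ppos[OF s'(2)] by simp
      hence "y' = y" using s'(2) by simp
      thus "p = (y, lam y)" using p' ll by simp
    qed
  qed
  show ?thesis
  proof (rule conjI[OF part1], intro allI impI)
    fix ls assume H: "ls > 0 \<and> G R ls = E \<and> M < m*(Zi R ls / Zo R ls)"
    show "(\<exists>!p::real\<times>real. R \<le> fst p \<and> snd p > 0 \<and> M = m*(Zi (fst p) (snd p) / Zo (fst p) (snd p)) \<and> G (fst p) (snd p) = E) \<and> (\<forall>y l. R \<le> y \<and> l > 0 \<and> M = m*(Zi y l / Zo y l) \<and> G y l = E \<longrightarrow> R < y \<and> y < E/(M*g))"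
    proof
    show "\<exists>!p::real\<times>real. R \<le> fst p \<and> snd p > 0 \<and> M = m*(Zi (fst p) (snd p) / Zo (fst p) (snd p)) \<and> G (fst p) (snd p) = E"
      using part2[of ls] H by blast
    show "\<forall>y l. R \<le> y \<and> l > 0 \<and> M = m*(Zi y l / Zo y l) \<and> G y l = E \<longrightarrow> R < y \<and> y < E/(M*g)"
      using bounds[of ls] H by blast
    qed
  qed
qed

end

lemma cheb:
  fixes p q X :: "real \<Rightarrow> real"
  assumes ip: "integrable lborel p" and iq: "integrable lborel q"
    and iXp: "integrable lborel (\<lambda>x. X x * p x)" and iXq: "integrable lborel (\<lambda>x. X x * q x)"
    and cond: "\<And>x z. (X x - X z) * (q x * p z - p x * q z) \<le> 0"
  shows "(\<integral>x. X x * q x \<partial>lborel) * (\<integral>x. p x \<partial>lborel) \<le> (\<integral>x. X x * p x \<partial>lborel) * (\<integral>x. q x \<partial>lborel)"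
proof -
  define Ip where "Ip = (\<integral>x. p x \<partial>lborel)"
  define Iq where "Iq = (\<integral>x. q x \<partial>lborel)"
  define IXp where "IXp = (\<integral>x. X x * p x \<partial>lborel)"
  define IXq where "IXq = (\<integral>x. X x * q x \<partial>lborel)"
  have inner: "X x * q x * Ip - X x * p x * Iq - q x * IXp + p x * IXq \<le> 0" for x
  proof -
    have eq: "(\<lambda>z. (X x - X z) * (q x * p z - p x * q z)) =
      (\<lambda>z. (X x * q x) * p z + ((- X x * p x) * q z + ((- q x) * (X z * p z) + p x * (X z * q z))))"
      by (auto simp: algebra_simps)
    have "has_bochner_integral lborel (\<lambda>z. (X x * q x) * p z + ((- X x * p x) * q z + ((- q x) * (X z * p z) + p x * (X z * q z))))
       ((X x * q x) * Ip + ((- X x * p x) * Iq + ((- q x) * IXp + p x * IXq)))"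
      unfolding Ip_def Iq_def IXp_def IXq_def
      by (intro has_bochner_integral_add has_bochner_integral_mult_right has_bochner_integral_integrable ip iq iXp iXq)
    hence "has_bochner_integral lborel (\<lambda>z. (X x - X z) * (q x * p z - p x * q z))
       ((X x * q x) * Ip + ((- X x * p x) * Iq + ((- q x) * IXp + p x * IXq)))" unfolding eq .
    hence v: "(\<integral>z. (X x - X z) * (q x * p z - p x * q z) \<partial>lborel) = ((X x * q x) * Ip + ((- X x * p x) * Iq + ((- q x) * IXp + p x * IXq)))"
      by (rule has_bochner_integral_integral_eq)
    have "0 \<le> (\<integral>z. - ((X x - X z) * (q x * p z - p x * q z)) \<partial>lborel)"
      by (rule Bochner_Integration.integral_nonneg) (use cond in \<open>auto simp: neg_le_0_iff_le\<close>)
    hence "(\<integral>z. (X x - X z) * (q x * p z - p x * q z) \<partial>lborel) \<le> 0"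
      unfolding Bochner_Integration.integral_minus by linarith
    thus ?thesis using v by (simp add: algebra_simps)
  qed
  have "has_bochner_integral lborel (\<lambda>x. Ip * (X x * q x) + ((- Iq) * (X x * p x) + ((- IXp) * q x + IXq * p x)))
       (Ip * IXq + ((- Iq) * IXp + ((- IXp) * Iq + IXq * Ip)))"
    unfolding Ip_def Iq_def IXp_def IXq_def
    by (intro has_bochner_integral_add has_bochner_integral_mult_right has_bochner_integral_integrable ip iq iXp iXq)
  hence v: "(\<integral>x. Ip * (X x * q x) + ((- Iq) * (X x * p x) + ((- IXp) * q x + IXq * p x)) \<partial>lborel) = Ip * IXq + ((- Iq) * IXp + ((- IXp) * Iq + IXq * Ip))"
    by (rule has_bochner_integral_integral_eq)
  have "0 \<le> (\<integral>x. - (Ip * (X x * q x) + ((- Iq) * (X x * p x) + ((- IXp) * q x + IXq * p x))) \<partial>lborel)"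
  proof (rule Bochner_Integration.integral_nonneg)
    fix x show "0 \<le> - (Ip * (X x * q x) + ((- Iq) * (X x * p x) + ((- IXp) * q x + IXq * p x)))"
      using inner[of x] by (simp add: algebra_simps)
  qed
  hence "(\<integral>x. Ip * (X x * q x) + ((- Iq) * (X x * p x) + ((- IXp) * q x + IXq * p x)) \<partial>lborel) \<le> 0"
    unfolding Bochner_Integration.integral_minus by linarith
  hence "IXq * Ip \<le> IXp * Iq" using v by (simp add: algebra_simps)
  thus ?thesis unfolding Ip_def Iq_def IXp_def IXq_def .
qed

lemma exp_moments:
  fixes l :: real
  assumes l: "l > 0"
  shows "integrable lborel (\<lambda>r. indicator {0..} r * (l * exp(-l*r)))"
    "(\<integral>r. indicator {0..} r * (l * exp(-l*r)) \<partial>lborel) = 1"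
    "integrable lborel (\<lambda>r. indicator {0..} r * (r * (l * exp(-l*r))))"
    "(\<integral>r. indicator {0..} r * (r * (l * exp(-l*r))) \<partial>lborel) = 1/l"
proof -
  have e0: "(\<integral>\<^sup>+ x. ennreal (indicator {0..} (x::real) * (l * exp(-l*x))) \<partial>lborel) = ennreal 1"
  proof -
    have "(\<integral>\<^sup>+ x. ennreal (indicator {0..} (x::real) * (l * exp(-l*x))) \<partial>lborel) =
       (\<integral>\<^sup>+ x. ennreal (erlang_density 0 l x * x ^ 0) \<partial>lborel)"
      by (intro nn_integral_cong) (auto simp: erlang_density_def mult.commute split: split_indicator)
    also have "... = fact (0 + 0) / (fact 0 * l ^ 0)" using nn_integral_erlang_ith_moment[OF l, of 0 0] .
    finally show ?thesis by simp
  qed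
  have e1: "(\<integral>\<^sup>+ x. ennreal (indicator {0..} (x::real) * (x * (l * exp(-l*x)))) \<partial>lborel) = ennreal (1/l)"
  proof -
    have "(\<integral>\<^sup>+ x. ennreal (indicator {0..} (x::real) * (x * (l * exp(-l*x)))) \<partial>lborel) =
       (\<integral>\<^sup>+ x. ennreal (erlang_density 0 l x * x ^ 1) \<partial>lborel)"
      by (intro nn_integral_cong) (auto simp: erlang_density_def mult.commute mult.left_commute split: split_indicator)
    also have "... = fact (0 + 1) / (fact 0 * l ^ 1)" using nn_integral_erlang_ith_moment[OF l, of 0 1] .
    finally show ?thesis using l by (simp add: divide_ennreal)
  qed
  have m0: "(\<lambda>r. indicator {0..} r * (l * exp(-l*r))) \<in> borel_measurable lborel" by measurable
  have m1: "(\<lambda>r. indicator {0..} r * (r * (l * exp(-l*r)))) \<in> borel_measurable lborel" by measurable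
  have n0: "AE x in lborel. 0 \<le> indicator {0..} x * (l * exp(-l*x))" using l by auto
  have n1: "AE x in lborel. 0 \<le> indicator {0..} x * (x * (l * exp(-l*x)))" using l by (auto split: split_indicator)
  from nn_integral_eq_integrable[OF m0 n0, of 1] e0
  show "integrable lborel (\<lambda>r. indicator {0..} r * (l * exp(-l*r)))"
    "(\<integral>r. indicator {0..} r * (l * exp(-l*r)) \<partial>lborel) = 1" by auto
  from nn_integral_eq_integrable[OF m1 n1, of "1/l"] e1 l
  show "integrable lborel (\<lambda>r. indicator {0..} r * (r * (l * exp(-l*r))))"
    "(\<integral>r. indicator {0..} r * (r * (l * exp(-l*r))) \<partial>lborel) = 1/l" by auto
qed

lemma integrable_supp:
  fixes h :: "real \<Rightarrow> real"
  assumes "continuous_on UNIV h" "\<And>s. s \<notin> {c..e} \<Longrightarrow> h s = 0"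
  shows "integrable lborel h"
proof -
  have "integrable lborel (\<lambda>s. indicator {c..e} s *\<^sub>R h s)"
    by (rule borel_integrable_compact) (auto intro: continuous_on_subset[OF assms(1)])
  moreover have "(\<lambda>s. indicator {c..e} s *\<^sub>R h s) = h" using assms(2) by (auto simp: fun_eq_iff split: split_indicator)
  ultimately show ?thesis by simp
qed


lemma pos_integral:
  fixes f :: "real \<Rightarrow> real"
  assumes "integrable lborel f" "\<And>x. f x \<ge> 0" "\<And>x. x \<in> {u..v} \<Longrightarrow> f x \<ge> c" "c > 0" "u < v"
  shows "(\<integral>x. f x \<partial>lborel) > 0"
proof -
  have i: "integrable lborel (\<lambda>x. indicator {u..v} x * c)"
    using assms by (intro integrable_mult_left integrable_real_indicator) auto
  have "(\<integral>x. indicator {u..v} x * c \<partial>lborel) \<le> (\<integral>x. f x \<partial>lborel)"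
    using i assms(1) by (rule integral_mono) (use assms in \<open>auto split: split_indicator\<close>)
  moreover have "(\<integral>x. indicator {u..v} x * c \<partial>lborel) = (v - u) * c"
    using assms by simp
  moreover have "(v - u) * c > 0" using assms by simp
  ultimately show ?thesis by linarith
qed

locale oneD =
  fixes V R A :: real and k :: nat
  assumes Vpos: "V > 0" and Rpos: "R > 0" and kpos: "k \<ge> 1" and AV: "V * R^k \<le> A"
begin

lemma Apos: "A > 0"
proof -
  have "V * R^k > 0" using Vpos Rpos by simp
  thus ?thesis using AV by linarith
qed

definition a where "a s = V * sqrt (max 0 (R\<^sup>2 - s\<^sup>2)) ^ k"

lemma a_cont: "continuous_on UNIV a"
  unfolding a_def by (intro continuous_intros)

lemma a_isCont: "isCont a s"
  using a_cont by (simp add: continuous_on_eq_continuous_at)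

lemma a_nonneg: "a s \<ge> 0"
  unfolding a_def using Vpos by simp

lemma sqrt_le_R: "sqrt (max 0 (R\<^sup>2 - s\<^sup>2)) \<le> R"
proof -
  have "max 0 (R\<^sup>2 - s\<^sup>2) \<le> R\<^sup>2" using Rpos by (simp add: max_def)
  hence "sqrt (max 0 (R\<^sup>2 - s\<^sup>2)) \<le> sqrt (R\<^sup>2)" by (rule real_sqrt_le_mono)
  thus ?thesis using Rpos by simp
qed

lemma a_le: "a s \<le> V * R^k"
  unfolding a_def using Vpos sqrt_le_R
  by (intro mult_left_mono power_mono) auto

lemma a_le_A: "a s \<le> A" using a_le AV by (rule order_trans)

lemma a_zero: "\<bar>s\<bar> \<ge> R \<Longrightarrow> a s = 0"
proof -
  assume "\<bar>s\<bar> \<ge> R"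
  hence "R\<^sup>2 \<le> s\<^sup>2" using Rpos by (metis abs_ge_zero abs_of_pos power2_abs power_mono)
  hence "max 0 (R\<^sup>2 - s\<^sup>2) = 0" by simp
  thus ?thesis unfolding a_def using kpos by (simp add: power_0_left)
qed

lemma a_mono: assumes "\<bar>s\<bar> \<le> \<bar>t\<bar>" shows "a t \<le> a s"
proof -
  have "t\<^sup>2 \<ge> s\<^sup>2" using assms by (metis abs_ge_zero power2_abs power_mono)
  hence "max 0 (R\<^sup>2 - t\<^sup>2) \<le> max 0 (R\<^sup>2 - s\<^sup>2)" by simp
  hence "sqrt (max 0 (R\<^sup>2 - t\<^sup>2)) \<le> sqrt (max 0 (R\<^sup>2 - s\<^sup>2))" by (rule real_sqrt_le_mono)
  thus ?thesis unfolding a_def using Vpos by (intro mult_left_mono power_mono) auto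
qed

definition P where "P l = (\<integral>x. a x * (l*exp(-l*x)) \<partial>lborel)"
definition Q where "Q l = (\<integral>x. x * (a x * (l*exp(-l*x))) \<partial>lborel)"

lemma int_a: assumes "continuous_on UNIV f" shows "integrable lborel (\<lambda>s. a (s - y) * f s)"
proof (rule integrable_supp[of _ "y - R" "y + R"])
  show "continuous_on UNIV (\<lambda>s. a (s - y) * f s)"
    by (intro continuous_intros continuous_on_compose2[OF a_cont] assms) auto
  fix s assume "s \<notin> {y - R..y + R}"
  hence "\<bar>s - y\<bar> \<ge> R" by auto
  thus "a (s - y) * f s = 0" using a_zero by simp
qed

lemma int_a0: "integrable lborel (\<lambda>x. a x * (l*exp(-l*x)))"
  using int_a[of "\<lambda>x. l*exp(-l*x)" 0] by (simp add: continuous_intros)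

lemma int_a1: "integrable lborel (\<lambda>x. x * (a x * (l*exp(-l*x))))"
  using int_a[of "\<lambda>x. x * (l*exp(-l*x))" 0] by (simp add: continuous_intros mult_ac)

lemma Zi_shift: "(\<integral>r. a (r - y) * (l*exp(-l*r)) \<partial>lborel) = exp(-l*y) * P l"
proof -
  have "(\<integral>r. a (r - y) * (l*exp(-l*r)) \<partial>lborel) = (\<integral>x. a x * (l*exp(-l*(y + x))) \<partial>lborel)"
    by (subst lborel_integral_real_affine[where c=1 and t=y]) simp_all
  also have "... = (\<integral>x. exp(-l*y) * (a x * (l*exp(-l*x))) \<partial>lborel)"
    by (rule Bochner_Integration.integral_cong) (simp_all only: distrib_left exp_add mult_ac)
  also have "... = exp(-l*y) * P l" unfolding P_def by simp
  finally show ?thesis .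
qed

lemma Ni_shift: "(\<integral>r. r * (a (r - y) * (l*exp(-l*r))) \<partial>lborel) = exp(-l*y) * (y * P l + Q l)"
proof -
  have "(\<integral>r. r * (a (r - y) * (l*exp(-l*r))) \<partial>lborel) = (\<integral>x. (y + x) * (a x * (l*exp(-l*(y + x)))) \<partial>lborel)"
    by (subst lborel_integral_real_affine[where c=1 and t=y]) simp_all
  also have "... = (\<integral>x. exp(-l*y) * (y * (a x * (l*exp(-l*x))) + x * (a x * (l*exp(-l*x)))) \<partial>lborel)"
    by (rule Bochner_Integration.integral_cong) (simp_all only: distrib_left distrib_right exp_add mult_ac)
  also have "... = exp(-l*y) * (\<integral>x. y * (a x * (l*exp(-l*x))) + x * (a x * (l*exp(-l*x))) \<partial>lborel)"
    by simp
  also have "(\<integral>x. y * (a x * (l*exp(-l*x))) + x * (a x * (l*exp(-l*x))) \<partial>lborel) = y * P l + Q l"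
    unfolding P_def Q_def using int_a0 int_a1 by (subst Bochner_Integration.integral_add) auto
  finally show ?thesis .
qed

definition sig where "sig y r = indicator {0..} r * (A - a (r - y))"

lemma sig_nonneg: "sig y r \<ge> 0"
  unfolding sig_def using a_le_A by auto

lemma sig_eq: assumes "y \<ge> R" shows "sig y r * f = A * (indicator {0..} r * f) - a (r - y) * f"
proof (cases "r \<ge> 0")
  case True thus ?thesis by (simp add: sig_def algebra_simps)
next
  case False
  hence "\<bar>r - y\<bar> \<ge> R" using assms by auto
  thus ?thesis using False a_zero by (simp add: sig_def)
qed

lemma Zo_int: assumes "y \<ge> R" "l > 0"
  shows "integrable lborel (\<lambda>r. sig y r * (l*exp(-l*r)))"
    "(\<integral>r. sig y r * (l*exp(-l*r)) \<partial>lborel) = A - exp(-l*y) * P l"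
proof -
  note e = exp_moments[OF assms(2)]
  have i2: "integrable lborel (\<lambda>r. a (r - y) * (l*exp(-l*r)))" by (rule int_a) (intro continuous_intros)
  have eq: "(\<lambda>r. sig y r * (l*exp(-l*r))) = (\<lambda>r. A * (indicator {0..} r * (l*exp(-l*r))) - a (r - y) * (l*exp(-l*r)))"
    using sig_eq[OF assms(1)] by auto
  show "integrable lborel (\<lambda>r. sig y r * (l*exp(-l*r)))" unfolding eq using e i2 by auto
  show "(\<integral>r. sig y r * (l*exp(-l*r)) \<partial>lborel) = A - exp(-l*y) * P l"
    unfolding eq using e i2 Zi_shift by (subst Bochner_Integration.integral_diff) auto
qed

lemma No_int: assumes "y \<ge> R" "l > 0"
  shows "integrable lborel (\<lambda>r. sig y r * (r*(l*exp(-l*r))))"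
    "(\<integral>r. sig y r * (r*(l*exp(-l*r))) \<partial>lborel) = A/l - exp(-l*y) * (y * P l + Q l)"
proof -
  note e = exp_moments[OF assms(2)]
  have i2: "integrable lborel (\<lambda>r. a (r - y) * (r*(l*exp(-l*r))))" by (rule int_a) (intro continuous_intros)
  have eq: "(\<lambda>r. sig y r * (r*(l*exp(-l*r)))) = (\<lambda>r. A * (indicator {0..} r * (r*(l*exp(-l*r)))) - a (r - y) * (r*(l*exp(-l*r))))"
    using sig_eq[OF assms(1)] by auto
  have eq2: "(\<lambda>r. a (r - y) * (r*(l*exp(-l*r)))) = (\<lambda>r. r * (a (r - y) * (l*exp(-l*r))))" by (auto simp: mult_ac)
  show "integrable lborel (\<lambda>r. sig y r * (r*(l*exp(-l*r))))" unfolding eq using e i2 by auto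
  show "(\<integral>r. sig y r * (r*(l*exp(-l*r))) \<partial>lborel) = A/l - exp(-l*y) * (y * P l + Q l)"
    unfolding eq using e i2 Ni_shift eq2 by (subst Bochner_Integration.integral_diff) auto
qed


lemma aR2_pos: "a (R/2) > 0"
proof -
  have "R\<^sup>2 - (R/2)\<^sup>2 > 0" using Rpos by (simp add: power2_eq_square field_simps)
  hence "sqrt (max 0 (R\<^sup>2 - (R/2)\<^sup>2)) > 0" by simp
  thus ?thesis unfolding a_def using Vpos by simp
qed

lemma P_pos: assumes "l > 0" shows "P l > 0"
  unfolding P_def
proof (rule pos_integral[OF int_a0 _ _ _ _])
  show "\<And>x. 0 \<le> a x * (l * exp (- l * x))" using a_nonneg assms by simp
  show "0 < a (R/2) * (l * exp(- l * (R/2)))" using aR2_pos assms by simp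
  show "0 < R/2" using Rpos by simp
  fix x assume x: "x \<in> {0..R/2}"
  have "a (R/2) \<le> a x" using x Rpos by (intro a_mono) auto
  moreover have "exp(- l * (R/2)) \<le> exp(-l*x)" using x assms by simp
  ultimately show "a (R/2) * (l * exp(- l * (R/2))) \<le> a x * (l * exp (- l * x))"
    using assms aR2_pos by (intro mult_mono) auto
qed

lemma RPQ_pos: assumes "l > 0" shows "R * P l + Q l > 0"
proof -
  have "R * P l + Q l = (\<integral>x. R * (a x * (l*exp(-l*x))) + x * (a x * (l*exp(-l*x))) \<partial>lborel)"
    unfolding P_def Q_def using int_a0 int_a1 by (subst Bochner_Integration.integral_add) auto
  also have "... > 0"
  proof (rule pos_integral[of _ 0 "R/2" "R * (a (R/2) * (l * exp(- l * (R/2))))"])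
    show "integrable lborel (\<lambda>x. R * (a x * (l*exp(-l*x))) + x * (a x * (l*exp(-l*x))))"
      using int_a0 int_a1 by auto
    show "0 < R * (a (R/2) * (l * exp(- l * (R/2))))" using aR2_pos assms Rpos by simp
    show "0 < R/2" using Rpos by simp
    fix x
    show "0 \<le> R * (a x * (l*exp(-l*x))) + x * (a x * (l*exp(-l*x)))"
    proof (cases "x \<ge> -R")
      case True
      hence "0 \<le> (R + x) * (a x * (l*exp(-l*x)))" using a_nonneg assms by simp
      thus ?thesis by (simp add: algebra_simps)
    next
      case False
      hence "a x = 0" by (intro a_zero) auto
      thus ?thesis by simp
    qed
    assume x: "x \<in> {0..R/2}"
    have "a (R/2) \<le> a x" using x Rpos by (intro a_mono) auto
    moreover have "exp(- l * (R/2)) \<le> exp(-l*x)" using x assms by simp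
    ultimately have "a (R/2) * (l * exp(- l * (R/2))) \<le> a x * (l * exp (- l * x))"
      using assms aR2_pos by (intro mult_mono) auto
    hence "R * (a (R/2) * (l * exp(- l * (R/2)))) \<le> R * (a x * (l * exp (- l * x)))"
      using Rpos by simp
    moreover have "0 \<le> x * (a x * (l*exp(-l*x)))" using x a_nonneg assms by simp
    ultimately show "R * (a (R/2) * (l * exp(- l * (R/2)))) \<le> R * (a x * (l*exp(-l*x))) + x * (a x * (l*exp(-l*x)))"
      by linarith
  qed
  finally show ?thesis .
qed

lemma h1: assumes "l > 0" "y \<ge> R" shows "exp(-l*y) * P l < A"
proof -
  have "(\<integral>r. sig y r * (l*exp(-l*r)) \<partial>lborel) > 0"
  proof (rule pos_integral[of _ "y+R" "y+R+1" "A * (l * exp(-l*(y+R+1)))"])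
    show "integrable lborel (\<lambda>r. sig y r * (l*exp(-l*r)))" using Zo_int[OF assms(2,1)] by simp
    show "\<And>x. 0 \<le> sig y x * (l*exp(-l*x))" using sig_nonneg assms by simp
    show "0 < A * (l * exp(-l*(y+R+1)))" using Apos assms by simp
    fix x assume x: "x \<in> {y+R..y+R+1}"
    have "sig y x = A" using x a_zero[of "x - y"] Rpos assms by (auto simp: sig_def)
    moreover have "exp(-l*(y+R+1)) \<le> exp(-l*x)" using x assms by simp
    ultimately show "A * (l * exp(-l*(y+R+1))) \<le> sig y x * (l*exp(-l*x))" using Apos assms by simp
  qed simp
  thus ?thesis using Zo_int[OF assms(2,1)] by simp
qed

lemma h6: assumes "l > 0" "y \<ge> R" shows "exp(-l*y) * (y * P l + Q l) \<le> A/l"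
proof -
  have "0 \<le> (\<integral>r. sig y r * (r*(l*exp(-l*r))) \<partial>lborel)"
  proof (rule Bochner_Integration.integral_nonneg)
    fix r show "0 \<le> sig y r * (r*(l*exp(-l*r)))"
      using sig_nonneg[of y r] assms by (cases "r \<ge> 0") (auto simp: sig_def)
  qed
  thus ?thesis using No_int[OF assms(2,1)] by simp
qed


lemma lint_eq_hk: assumes "continuous_on UNIV f"
  shows "(\<integral>x. a x * f x \<partial>lborel) = integral {-R..R} (\<lambda>x. a x * f x)"
proof -
  have c: "continuous_on {-R..R} (\<lambda>x. a x * f x)"
    by (intro continuous_intros continuous_on_subset[OF a_cont] continuous_on_subset[OF assms]) auto
  have si: "set_integrable lborel {-R..R} (\<lambda>x. a x * f x)" by (rule borel_integrable_atLeastAtMost'[OF c])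
  have "(\<integral>x. a x * f x \<partial>lborel) = (LINT x:{-R..R}|lborel. a x * f x)"
    unfolding set_lebesgue_integral_def
    by (rule Bochner_Integration.integral_cong) (auto simp: a_zero split: split_indicator)
  also have "... = integral {-R..R} (\<lambda>x. a x * f x)" by (rule set_borel_integral_eq_integral(2)[OF si])
  finally show ?thesis .
qed

lemma P_hk: "P l = integral {-R..R} (\<lambda>x. a x * (l*exp(-l*x)))"
  unfolding P_def by (rule lint_eq_hk) (intro continuous_intros)

lemma Q_hk: "Q l = integral {-R..R} (\<lambda>x. a x * (x * (l*exp(-l*x))))"
proof -
  have "Q l = (\<integral>x. a x * (x * (l*exp(-l*x))) \<partial>lborel)" unfolding Q_def by (simp add: mult_ac)
  also have "... = integral {-R..R} (\<lambda>x. a x * (x * (l*exp(-l*x))))" by (rule lint_eq_hk) (intro continuous_intros)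
  finally show ?thesis .
qed

lemma contP: "continuous_on {0<..} P"
proof -
  have "continuous_on {0<..} (\<lambda>l. integral (cbox (-R) R) (\<lambda>x. a x * (l*exp(-l*x))))"
  proof (rule integral_continuous_on_param)
    show "continuous_on ({0<..} \<times> cbox (- R) R) (\<lambda>(l, x). a x * (l * exp (- l * x)))"
      unfolding case_prod_beta
      by (intro continuous_intros continuous_on_compose2[OF a_cont]) auto
  qed
  thus ?thesis using P_hk by (simp add: cbox_interval)
qed

lemma contQ: "continuous_on {0<..} Q"
proof -
  have "continuous_on {0<..} (\<lambda>l. integral (cbox (-R) R) (\<lambda>x. a x * (x * (l*exp(-l*x)))))"
  proof (rule integral_continuous_on_param)
    show "continuous_on ({0<..} \<times> cbox (- R) R) (\<lambda>(l, x). a x * (x * (l * exp (- l * x))))"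
      unfolding case_prod_beta
      by (intro continuous_intros continuous_on_compose2[OF a_cont]) auto
  qed
  thus ?thesis using Q_hk by (simp add: cbox_interval)
qed


lemma a_bound: assumes "\<delta> > 0"
  shows "a (r - R) \<le> indicator {0..} r * (V*R^(k-1)*\<delta>/2 + V*R^(k-1)*R/\<delta> * r)"
proof (cases "r \<ge> 0")
  case False
  hence "\<bar>r - R\<bar> \<ge> R" using Rpos by auto
  thus ?thesis using a_zero False by simp
next
  case True
  define t where "t = sqrt (max 0 (R\<^sup>2 - (r - R)\<^sup>2))"
  have t0: "t \<ge> 0" by (simp add: t_def)
  have tR: "t \<le> R" unfolding t_def by (rule sqrt_le_R)
  have "max 0 (R\<^sup>2 - (r - R)\<^sup>2) \<le> 2*R*r" using True Rpos by (simp add: power2_eq_square algebra_simps)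
  also have "2*R*r \<le> (\<delta>/2 + R*r/\<delta>)\<^sup>2"
  proof -
    have "(\<delta>/2 + R*r/\<delta>)\<^sup>2 - 2*R*r = (\<delta>/2 - R*r/\<delta>)\<^sup>2" using assms by (simp add: power2_eq_square field_simps)
    thus ?thesis by (smt (verit) zero_le_power2)
  qed
  finally have "t \<le> sqrt ((\<delta>/2 + R*r/\<delta>)\<^sup>2)" unfolding t_def by (rule real_sqrt_le_mono)
  also have "... = \<delta>/2 + R*r/\<delta>" using assms True Rpos by simp
  finally have tb: "t \<le> \<delta>/2 + R*r/\<delta>" .
  have "t^k = t * t^(k-1)" using kpos by (metis Suc_diff_le diff_Suc_1 power_Suc)
  also have "... \<le> t * R^(k-1)" using t0 tR by (intro mult_left_mono power_mono) auto
  finally have "a (r - R) \<le> V * (t * R^(k-1))" unfolding a_def t_def[symmetric] using Vpos by simp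
  also have "... \<le> V * ((\<delta>/2 + R*r/\<delta>) * R^(k-1))" using Vpos tb Rpos by (intro mult_left_mono mult_right_mono) auto
  also have "... = V*R^(k-1)*\<delta>/2 + V*R^(k-1)*R/\<delta> * r" by (simp add: field_simps)
  finally show ?thesis using True by simp
qed

lemma h3: assumes "\<epsilon> > 0" shows "\<exists>L>0. \<forall>l\<ge>L. exp(-l*R) * P l < \<epsilon>"
proof -
  define C where "C = V*R^(k-1)"
  have Cp: "C > 0" using Vpos Rpos by (simp add: C_def)
  define \<delta> where "\<delta> = \<epsilon> / C"
  have dp: "\<delta> > 0" using assms Cp by (simp add: \<delta>_def)
  define L where "L = 2*C*C*R/(\<epsilon>*\<epsilon>) + 1"
  have Lp: "L > 0" using Cp Rpos assms by (simp add: L_def add_pos_pos)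
  have "exp(-l*R) * P l < \<epsilon>" if l: "l \<ge> L" for l
  proof -
    have lp: "l > 0" using l Lp by simp
    note e = exp_moments[OF lp]
    have i1: "integrable lborel (\<lambda>r. a (r - R) * (l*exp(-l*r)))" by (rule int_a) (intro continuous_intros)
    have i2: "integrable lborel (\<lambda>r. (C*\<delta>/2) * (indicator {0..} r * (l*exp(-l*r))) + (C*R/\<delta>) * (indicator {0..} r * (r*(l*exp(-l*r)))))"
      using e by auto
    have "exp(-l*R) * P l = (\<integral>r. a (r - R) * (l*exp(-l*r)) \<partial>lborel)" using Zi_shift by simp
    also have "... \<le> (\<integral>r. (C*\<delta>/2) * (indicator {0..} r * (l*exp(-l*r))) + (C*R/\<delta>) * (indicator {0..} r * (r*(l*exp(-l*r)))) \<partial>lborel)"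
    proof (rule integral_mono[OF i1 i2])
      fix r
      have "a (r - R) * (l*exp(-l*r)) \<le> indicator {0..} r * (C*\<delta>/2 + C*R/\<delta> * r) * (l*exp(-l*r))"
        using a_bound[OF dp, of r] lp unfolding C_def by (intro mult_right_mono) auto
      thus "a (r - R) * (l*exp(-l*r)) \<le> (C*\<delta>/2) * (indicator {0..} r * (l*exp(-l*r))) + (C*R/\<delta>) * (indicator {0..} r * (r*(l*exp(-l*r))))"
        by (simp add: algebra_simps)
    qed
    also have "... = C*\<delta>/2 + (C*R/\<delta>) * (1/l)" using e by (subst Bochner_Integration.integral_add) auto
    also have "C*\<delta>/2 = \<epsilon>/2" using Cp by (simp add: \<delta>_def)
    also have "(C*R/\<delta>) * (1/l) = C*C*R/(\<epsilon>*l)" using Cp assms by (simp add: \<delta>_def field_simps)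
    also have "C*C*R/(\<epsilon>*l) < \<epsilon>/2"
    proof -
      have "l > 2*C*C*R/(\<epsilon>*\<epsilon>)" using l by (simp add: L_def)
      hence "l * (\<epsilon>*\<epsilon>) > 2*C*C*R" using assms by (simp add: field_simps)
      thus ?thesis using assms lp by (simp add: field_simps)
    qed
    finally show ?thesis by simp
  qed
  thus ?thesis using Lp by blast
qed


lemma h4: assumes "y \<ge> R" "0 < l1" "l1 < l2"
  shows "(A/l2 - exp(-l2*y)*(y*P l2 + Q l2)) * (A - exp(-l1*y)*P l1)
       \<le> (A/l1 - exp(-l1*y)*(y*P l1 + Q l1)) * (A - exp(-l2*y)*P l2)"
proof -
  have l2: "l2 > 0" using assms by simp
  define p where "p r = sig y r * (l1*exp(-l1*r))" for r
  define q where "q r = sig y r * (l2*exp(-l2*r))" for r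
  have ip: "integrable lborel p" unfolding p_def using Zo_int[OF assms(1,2)] by simp
  have iq: "integrable lborel q" unfolding q_def using Zo_int[OF assms(1) l2] by simp
  have eXp: "(\<lambda>x. x * p x) = (\<lambda>r. sig y r * (r*(l1*exp(-l1*r))))" by (auto simp: p_def mult_ac)
  have eXq: "(\<lambda>x. x * q x) = (\<lambda>r. sig y r * (r*(l2*exp(-l2*r))))" by (auto simp: q_def mult_ac)
  have iXp: "integrable lborel (\<lambda>x. x * p x)" unfolding eXp using No_int[OF assms(1,2)] by simp
  have iXq: "integrable lborel (\<lambda>x. x * q x)" unfolding eXq using No_int[OF assms(1) l2] by simp
  have cond: "(x - z) * (q x * p z - p x * q z) \<le> 0" for x z
  proof -
    have key: "(x - z) * (exp(-l2*x)*exp(-l1*z) - exp(-l1*x)*exp(-l2*z)) \<le> 0"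
    proof (cases "x \<ge> z")
      case True
      have "(l2 - l1) * (x - z) \<ge> 0" using True assms by simp
      hence "-l2*x + -l1*z \<le> -l1*x + -l2*z" by (simp add: algebra_simps)
      hence "exp(-l2*x)*exp(-l1*z) \<le> exp(-l1*x)*exp(-l2*z)" by (simp add: mult_exp_exp)
      thus ?thesis using True by (intro mult_nonneg_nonpos) auto
    next
      case False
      have "(l2 - l1) * (z - x) \<ge> 0" using False assms by simp
      hence "-l2*x + -l1*z \<ge> -l1*x + -l2*z" by (simp add: algebra_simps)
      hence "exp(-l2*x)*exp(-l1*z) \<ge> exp(-l1*x)*exp(-l2*z)" by (simp add: mult_exp_exp)
      thus ?thesis using False by (intro mult_nonpos_nonneg) auto
    qed
    have "(x - z) * (q x * p z - p x * q z) = (sig y x * sig y z * l1 * l2) * ((x - z) * (exp(-l2*x)*exp(-l1*z) - exp(-l1*x)*exp(-l2*z)))"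
      by (simp add: p_def q_def algebra_simps)
    also have "... \<le> 0" by (rule mult_nonneg_nonpos[OF _ key]) (use sig_nonneg assms in auto)
    finally show ?thesis .
  qed
  have c: "(\<integral>x. x * q x \<partial>lborel) * (\<integral>x. p x \<partial>lborel) \<le> (\<integral>x. x * p x \<partial>lborel) * (\<integral>x. q x \<partial>lborel)"
    by (rule cheb[OF ip iq iXp iXq cond])
  thus ?thesis unfolding eXp eXq unfolding p_def q_def
    using Zo_int[OF assms(1,2)] Zo_int[OF assms(1) l2] No_int[OF assms(1,2)] No_int[OF assms(1) l2] by simp
qed


definition w where "w l x = a (x/l - R) * exp(-x)"

lemma a_shift_eq: "a (s - R) = V * sqrt (max 0 (s * (2*R - s))) ^ k"
proof -
  have "R\<^sup>2 - (s - R)\<^sup>2 = s * (2*R - s)" by (simp add: power2_eq_square algebra_simps)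
  thus ?thesis unfolding a_def by simp
qed

lemma uprod: assumes "0 < l1" "l1 \<le> l2" "z \<le> x"
  shows "max 0 ((x/l1) * (2*R - x/l1)) * max 0 ((z/l2) * (2*R - z/l2))
      \<le> max 0 ((x/l2) * (2*R - x/l2)) * max 0 ((z/l1) * (2*R - z/l1))"
proof -
  have l2: "l2 > 0" using assms by simp
  consider "z \<le> 0" | "x/l1 \<ge> 2*R" | "z > 0" "x/l1 < 2*R" by linarith
  thus ?thesis
  proof cases
    case 1
    hence "z/l2 \<le> 0" using l2 by (simp add: divide_nonpos_pos)
    hence "(z/l2) * (2*R - z/l2) \<le> 0" using Rpos by (intro mult_nonpos_nonneg) auto
    thus ?thesis by simp
  next
    case 2
    hence "(x/l1) * (2*R - x/l1) \<le> 0" using Rpos by (intro mult_nonneg_nonpos) auto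
    thus ?thesis by simp
  next
    case 3
    define \<alpha> where "\<alpha> = 1/l1"
    define \<beta> where "\<beta> = 1/l2"
    have ab: "\<beta> \<le> \<alpha>" "\<beta> > 0" using assms by (auto simp: \<alpha>_def \<beta>_def frac_le)
    have x0: "x > 0" using 3 assms by simp
    have ax: "\<alpha>*x < 2*R" using 3 by (simp add: \<alpha>_def)
    have bx: "\<beta>*x \<le> \<alpha>*x" using ab x0 by (simp add: mult_right_mono)
    have az: "\<alpha>*z \<le> \<alpha>*x" using ab 3 assms by (intro mult_left_mono) auto
    have bz: "\<beta>*z \<le> \<alpha>*z" using ab 3 by (simp add: mult_right_mono)
    have pos: "\<alpha>*x > 0" "\<beta>*x > 0" "\<alpha>*z > 0" "\<beta>*z > 0" using ab x0 3 by auto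
    have e: "x/l1 = \<alpha>*x" "x/l2 = \<beta>*x" "z/l1 = \<alpha>*z" "z/l2 = \<beta>*z" by (auto simp: \<alpha>_def \<beta>_def)
    have m1: "max 0 ((\<alpha>*x) * (2*R - \<alpha>*x)) = (\<alpha>*x) * (2*R - \<alpha>*x)" using pos ax by simp
    have m2: "max 0 ((\<beta>*x) * (2*R - \<beta>*x)) = (\<beta>*x) * (2*R - \<beta>*x)" using pos ax bx by simp
    have m3: "max 0 ((\<alpha>*z) * (2*R - \<alpha>*z)) = (\<alpha>*z) * (2*R - \<alpha>*z)" using pos ax az by simp
    have m4: "max 0 ((\<beta>*z) * (2*R - \<beta>*z)) = (\<beta>*z) * (2*R - \<beta>*z)" using pos ax az bz by simp
    have br: "(2*R - \<alpha>*x) * (2*R - \<beta>*z) \<le> (2*R - \<beta>*x) * (2*R - \<alpha>*z)"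
    proof -
      have "(2*R - \<beta>*x) * (2*R - \<alpha>*z) - (2*R - \<alpha>*x) * (2*R - \<beta>*z) = 2*R*((\<alpha> - \<beta>)*(x - z))"
        by (simp add: algebra_simps)
      moreover have "2*R*((\<alpha> - \<beta>)*(x - z)) \<ge> 0" using ab assms Rpos by simp
      ultimately show ?thesis by linarith
    qed
    have "(\<alpha>*x) * (2*R - \<alpha>*x) * ((\<beta>*z) * (2*R - \<beta>*z)) = (\<alpha>*\<beta>*x*z) * ((2*R - \<alpha>*x) * (2*R - \<beta>*z))"
      by (simp add: algebra_simps)
    also have "... \<le> (\<alpha>*\<beta>*x*z) * ((2*R - \<beta>*x) * (2*R - \<alpha>*z))"
      using br pos ab x0 3 by (intro mult_left_mono) auto
    also have "... = (\<beta>*x) * (2*R - \<beta>*x) * ((\<alpha>*z) * (2*R - \<alpha>*z))" by (simp add: algebra_simps)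
    finally show ?thesis unfolding e m1 m2 m3 m4 .
  qed
qed

lemma mlr: assumes "0 < l1" "l1 \<le> l2" "z \<le> x"
  shows "a (x/l1 - R) * a (z/l2 - R) \<le> a (x/l2 - R) * a (z/l1 - R)"
proof -
  define u where "u s = max 0 (s * (2*R - s))" for s
  have u0: "u s \<ge> 0" for s by (simp add: u_def)
  have "a (x/l1 - R) * a (z/l2 - R) = V*V * sqrt (u (x/l1) * u (z/l2)) ^ k"
    unfolding a_shift_eq u_def by (simp add: real_sqrt_mult power_mult_distrib)
  also have "... \<le> V*V * sqrt (u (x/l2) * u (z/l1)) ^ k"
    using uprod[OF assms] Vpos unfolding u_def
    by (intro mult_left_mono power_mono real_sqrt_le_mono) auto
  also have "... = a (x/l2 - R) * a (z/l1 - R)"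
    unfolding a_shift_eq u_def by (simp add: real_sqrt_mult power_mult_distrib)
  finally show ?thesis .
qed

lemma int_w: assumes "l > 0" "continuous_on UNIV f" shows "integrable lborel (\<lambda>x. f x * w l x)"
proof (rule integrable_supp[of _ 0 "2*R*l"])
  show "continuous_on UNIV (\<lambda>x. f x * w l x)" unfolding w_def using assms
    by (intro continuous_intros continuous_on_compose2[OF a_cont]) auto
  fix x assume "x \<notin> {0..2*R*l}"
  hence "x < 0 \<or> x > 2*R*l" by auto
  hence "\<bar>x/l - R\<bar> \<ge> R"
  proof
    assume "x < 0" hence "x/l < 0" using assms by (simp add: divide_neg_pos)
    thus ?thesis using Rpos by simp
  next
    assume "x > 2*R*l" hence "x/l > 2*R" using assms by (simp add: field_simps)
    thus ?thesis by simp
  qed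
  thus "f x * w l x = 0" unfolding w_def using a_zero by simp
qed

lemma P_w: assumes "l > 0" shows "P l = exp(l*R) * (\<integral>x. w l x \<partial>lborel)"
proof -
  have "P l = \<bar>1/l\<bar> *\<^sub>R (\<integral>x. a (-R + 1/l*x) * (l*exp(-l*(-R + 1/l*x))) \<partial>lborel)"
    unfolding P_def using assms by (subst lborel_integral_real_affine[where c="1/l" and t="-R"]) simp_all
  also have "(\<integral>x. a (-R + 1/l*x) * (l*exp(-l*(-R + 1/l*x))) \<partial>lborel) = (\<integral>x. (l*exp(l*R)) * w l x \<partial>lborel)"
  proof (rule Bochner_Integration.integral_cong)
    fix x
    have e0: "-l*(-R + 1/l*x) = l*R + -x" using assms by (simp add: field_simps)
    have e1: "exp(-l*(-R + 1/l*x)) = exp(l*R) * exp(-x)" by (subst e0, rule exp_add)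
    have e2: "-R + 1/l*x = x/l - R" by simp
    show "a (-R + 1/l*x) * (l*exp(-l*(-R + 1/l*x))) = (l*exp(l*R)) * w l x"
      unfolding e1 unfolding e2 w_def by (simp add: mult_ac)
  qed simp
  also have "... = (l*exp(l*R)) * (\<integral>x. w l x \<partial>lborel)" by simp
  finally show ?thesis using assms by simp
qed

lemma RPQ_w: assumes "l > 0" shows "R * P l + Q l = exp(l*R) / l * (\<integral>x. x * w l x \<partial>lborel)"
proof -
  have "R * P l + Q l = (\<integral>x. R * (a x * (l*exp(-l*x))) + x * (a x * (l*exp(-l*x))) \<partial>lborel)"
    unfolding P_def Q_def using int_a0 int_a1 by (subst Bochner_Integration.integral_add) auto
  also have "... = (\<integral>x. (R + x) * (a x * (l*exp(-l*x))) \<partial>lborel)"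
    by (rule Bochner_Integration.integral_cong) (simp_all add: algebra_simps)
  also have "... = \<bar>1/l\<bar> *\<^sub>R (\<integral>x. (R + (-R + 1/l*x)) * (a (-R + 1/l*x) * (l*exp(-l*(-R + 1/l*x)))) \<partial>lborel)"
    using assms by (subst lborel_integral_real_affine[where c="1/l" and t="-R"]) simp_all
  also have "(\<integral>x. (R + (-R + 1/l*x)) * (a (-R + 1/l*x) * (l*exp(-l*(-R + 1/l*x)))) \<partial>lborel) = (\<integral>x. exp(l*R) * (x * w l x) \<partial>lborel)"
  proof (rule Bochner_Integration.integral_cong)
    fix x
    have e0: "-l*(-R + 1/l*x) = l*R + -x" using assms by (simp add: field_simps)
    have e1: "exp(-l*(-R + 1/l*x)) = exp(l*R) * exp(-x)" by (subst e0, rule exp_add)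
    have e2: "-R + 1/l*x = x/l - R" by simp
    have e3: "R + (-R + 1/l*x) = x/l" by simp
    show "(R + (-R + 1/l*x)) * (a (-R + 1/l*x) * (l*exp(-l*(-R + 1/l*x)))) = exp(l*R) * (x * w l x)"
      unfolding e1 e3 unfolding e2 w_def using assms by (simp add: field_simps)
  qed simp
  also have "... = exp(l*R) * (\<integral>x. x * w l x \<partial>lborel)" by simp
  finally show ?thesis using assms by simp
qed

lemma h5: assumes "0 < l1" "l1 \<le> l2" shows "l1*(R + Q l1/P l1) \<le> l2*(R + Q l2/P l2)"
proof -
  have l2: "l2 > 0" using assms by simp
  have H: "l*(R + Q l/P l) = (\<integral>x. x * w l x \<partial>lborel) / (\<integral>x. w l x \<partial>lborel)" if l: "l > 0" for l
  proof -
    have Pp: "P l > 0" using P_pos l .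
    have "l*(R + Q l/P l) = l * (R * P l + Q l) / P l" using Pp by (simp add: field_simps)
    also have "... = (\<integral>x. x * w l x \<partial>lborel) / (\<integral>x. w l x \<partial>lborel)"
      by (subst RPQ_w[OF l]) (use l in \<open>simp add: P_w[OF l]\<close>)
    finally show ?thesis .
  qed
  have W0pos: "(\<integral>x. w l x \<partial>lborel) > 0" if l: "l > 0" for l
  proof -
    have "0 < P l" using P_pos l .
    thus ?thesis unfolding P_w[OF l] by (simp add: zero_less_mult_iff)
  qed
  have i0: "integrable lborel (w l)" if "l > 0" for l using int_w[OF that, of "\<lambda>_. 1"] by simp
  have i1: "integrable lborel (\<lambda>x. x * w l x)" if "l > 0" for l using int_w[OF that, of "\<lambda>x. x"] by (simp add: continuous_on_id)
  have cond: "(x - z) * (w l1 x * w l2 z - w l2 x * w l1 z) \<le> 0" for x z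
  proof (cases "z \<le> x")
    case True
    have "a (x/l1 - R) * a (z/l2 - R) \<le> a (x/l2 - R) * a (z/l1 - R)" using mlr[OF assms True] .
    hence "w l1 x * w l2 z \<le> w l2 x * w l1 z" unfolding w_def
      by (simp add: mult_right_mono mult_ac)
    thus ?thesis using True by (intro mult_nonneg_nonpos) auto
  next
    case False
    hence xz: "x \<le> z" by simp
    have "a (z/l1 - R) * a (x/l2 - R) \<le> a (z/l2 - R) * a (x/l1 - R)" using mlr[OF assms xz] .
    hence "w l2 x * w l1 z \<le> w l1 x * w l2 z" unfolding w_def
      by (simp add: mult_right_mono mult_ac)
    thus ?thesis using False by (intro mult_nonpos_nonneg) auto
  qed
  have c: "(\<integral>x. x * w l1 x \<partial>lborel) * (\<integral>x. w l2 x \<partial>lborel) \<le> (\<integral>x. x * w l2 x \<partial>lborel) * (\<integral>x. w l1 x \<partial>lborel)"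
    by (rule cheb[OF i0[OF l2] i0[OF assms(1)] i1[OF l2] i1[OF assms(1)] cond])
  have "(\<integral>x. x * w l1 x \<partial>lborel) / (\<integral>x. w l1 x \<partial>lborel) \<le> (\<integral>x. x * w l2 x \<partial>lborel) / (\<integral>x. w l2 x \<partial>lborel)"
    using c W0pos[OF assms(1)] W0pos[OF l2] by (simp add: divide_simps mult.commute)
  thus ?thesis using H[OF assms(1)] H[OF l2] by simp
qed

end


lemma slice_int:
  fixes S :: "('a::euclidean_space \<times> real) set" and f \<sigma> :: "real \<Rightarrow> real"
  assumes S: "S \<in> sets borel" and fm: "f \<in> borel_measurable borel" and f0: "\<And>r. f r \<ge> 0"
    and sl: "\<And>r. emeasure lborel {x. (x,r) \<in> S} = ennreal (\<sigma> r)"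
    and s0: "\<And>r. \<sigma> r \<ge> 0" and sm: "\<sigma> \<in> borel_measurable borel"
  shows "(LINT z:S|lborel. f (snd z)) = (\<integral>r. \<sigma> r * f r \<partial>lborel)"
proof -
  have sndm: "(snd :: 'a \<times> real \<Rightarrow> real) \<in> borel_measurable borel"
    by (intro borel_measurable_continuous_onI continuous_on_snd continuous_on_id)
  have fs: "(\<lambda>z. f (snd z)) \<in> borel_measurable (borel :: ('a \<times> real) measure)"
    using measurable_compose[OF sndm fm] by (simp add: comp_def)
  have meas0: "(\<lambda>z. indicator S z * f (snd z)) \<in> borel_measurable (borel :: ('a \<times> real) measure)"
    using S fs by measurable
  have meas: "(\<lambda>z. indicator S z * f (snd z)) \<in> borel_measurable (lborel :: ('a \<times> real) measure)"
    using meas0 by (simp add: measurable_lborel1)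
  have meas2: "(\<lambda>z. ennreal (indicator S z * f (snd z))) \<in> borel_measurable (lborel \<Otimes>\<^sub>M (lborel :: real measure) :: ('a \<times> real) measure)"
    unfolding lborel_prod using measurable_compose[OF meas measurable_ennreal] .
  have Sp: "S \<in> sets (lborel \<Otimes>\<^sub>M (lborel :: real measure) :: ('a \<times> real) measure)"
    unfolding lborel_prod using S by simp
  have "(LINT z:S|lborel. f (snd z)) = (\<integral>z. indicator S z * f (snd z) \<partial>lborel)"
    unfolding set_lebesgue_integral_def by simp
  also have "... = enn2real (\<integral>\<^sup>+ z. ennreal (indicator S z * f (snd z)) \<partial>lborel)"
    by (rule integral_eq_nn_integral[OF meas]) (use f0 in \<open>auto split: split_indicator\<close>)
  also have "(\<integral>\<^sup>+ z. ennreal (indicator S z * f (snd z)) \<partial>lborel) =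
      (\<integral>\<^sup>+ z. ennreal (indicator S z * f (snd z)) \<partial>(lborel \<Otimes>\<^sub>M (lborel :: real measure) :: ('a \<times> real) measure))"
    by (simp add: lborel_prod)
  also have "... = (\<integral>\<^sup>+ r. (\<integral>\<^sup>+ x. ennreal (indicator S (x, r) * f r) \<partial>lborel) \<partial>lborel)"
    using lborel_pair.nn_integral_snd[OF meas2] by simp
  also have "... = (\<integral>\<^sup>+ r. ennreal (\<sigma> r * f r) \<partial>lborel)"
  proof (rule nn_integral_cong)
    fix r :: real
    have set: "{x. (x,r) \<in> S} \<in> sets (lborel :: 'a measure)"
      using sets_Pair2[OF Sp, of r] by (simp add: vimage_def)
    have "(\<integral>\<^sup>+ x. ennreal (indicator S (x, r) * f r) \<partial>lborel) = (\<integral>\<^sup>+ x. ennreal (f r) * indicator {x. (x,r) \<in> S} x \<partial>lborel)"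
      by (intro nn_integral_cong) (auto split: split_indicator)
    also have "... = ennreal (f r) * emeasure lborel {x. (x,r) \<in> S}" by (rule nn_integral_cmult_indicator[OF set])
    also have "... = ennreal (\<sigma> r * f r)" using sl[of r] s0[of r] f0[of r] by (simp add: ennreal_mult' mult.commute)
    finally show "(\<integral>\<^sup>+ x. ennreal (indicator S (x, r) * f r) \<partial>lborel) = ennreal (\<sigma> r * f r)" .
  qed
  also have "enn2real ... = (\<integral>r. \<sigma> r * f r \<partial>lborel)"
    by (rule integral_eq_nn_integral[symmetric]) (use fm sm s0 f0 in auto)
  finally show ?thesis .
qed

locale mD =
  fixes Db :: "'a::euclidean_space set" and R :: real and xt :: 'a
  assumes Dopen: "open Db" and Dbdd: "bounded Db" and Rpos': "R > 0" and ballsub: "ball xt R \<subseteq> Db"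
begin

definition V where "V = measure lborel (ball (0::'a) 1)"
definition A where "A = measure lborel Db"

lemma em_ball: "\<rho> \<ge> 0 \<Longrightarrow> emeasure lborel (ball c \<rho>) = ennreal (V * \<rho> ^ DIM('a))" for c :: 'a
  using content_ball_conv_unit_ball[of \<rho> c] emeasure_lborel_ball_finite[of c \<rho>]
  by (simp add: emeasure_eq_ennreal_measure V_def mult.commute)

lemma emDb: "emeasure lborel Db = ennreal A"
  using emeasure_bounded_finite[OF Dbdd] by (simp add: A_def emeasure_eq_ennreal_measure)

lemma oneD: "oneD V R A DIM('a)"
proof
  show "V > 0" unfolding V_def by (rule content_ball_pos) simp
  show "R > 0" by (rule Rpos')
  show "1 \<le> DIM('a)" by (simp add: DIM_positive Suc_le_eq)
  have "ennreal (V * R ^ DIM('a)) = emeasure lborel (ball xt R)" using em_ball Rpos' by simp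
  also have "... \<le> emeasure lborel Db" using ballsub by (intro emeasure_mono) (auto intro: borel_open Dopen)
  also have "... = ennreal A" by (rule emDb)
  finally show "V * R ^ DIM('a) \<le> A" by (simp add: A_def)
qed

sublocale O: oneD V R A "DIM('a)" by (rule oneD)


lemma slice_ball: "{x. (x, r) \<in> ball (xt, y) R} = ball xt (sqrt (max 0 (R\<^sup>2 - (r - y)\<^sup>2)))"
proof -
  have "(x, r) \<in> ball (xt, y) R \<longleftrightarrow> x \<in> ball xt (sqrt (max 0 (R\<^sup>2 - (r - y)\<^sup>2)))" for x
  proof -
    have "(x, r) \<in> ball (xt, y) R \<longleftrightarrow> sqrt ((dist xt x)\<^sup>2 + (dist y r)\<^sup>2) < R"
      by (simp add: dist_Pair_Pair)
    also have "... \<longleftrightarrow> sqrt ((dist xt x)\<^sup>2 + (dist y r)\<^sup>2) < sqrt (R\<^sup>2)"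
      using Rpos' by simp
    also have "... \<longleftrightarrow> (dist xt x)\<^sup>2 + (dist y r)\<^sup>2 < R\<^sup>2"
      by (rule real_sqrt_less_iff)
    also have "... \<longleftrightarrow> (dist xt x)\<^sup>2 < max 0 (R\<^sup>2 - (r - y)\<^sup>2)"
    proof -
      have d0: "0 \<le> (dist xt x)\<^sup>2" by simp
      have e: "(dist y r)\<^sup>2 = (r - y)\<^sup>2" by (simp add: dist_real_def power2_commute)
      show ?thesis unfolding e max_def using d0 by (smt (verit))
    qed
    also have "... \<longleftrightarrow> sqrt ((dist xt x)\<^sup>2) < sqrt (max 0 (R\<^sup>2 - (r - y)\<^sup>2))"
      by (rule real_sqrt_less_iff[symmetric])
    also have "sqrt ((dist xt x)\<^sup>2) = dist xt x" by simp
    finally show ?thesis by simp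
  qed
  thus ?thesis by blast
qed



lemma em_slice_ball: "emeasure lborel {x. (x, r) \<in> ball (xt, y) R} = ennreal (O.a (r - y))"
proof -
  have "emeasure lborel {x. (x, r) \<in> ball (xt, y) R} = emeasure lborel (ball xt (sqrt (max 0 (R\<^sup>2 - (r - y)\<^sup>2))))"
    by (simp only: slice_ball)
  also have "... = ennreal (V * sqrt (max 0 (R\<^sup>2 - (r - y)\<^sup>2)) ^ DIM('a))" by (rule em_ball) simp
  also have "... = ennreal (O.a (r - y))" by (simp only: O.a_def)
  finally show ?thesis .
qed


lemma ball_sub_cyl: assumes "y \<ge> R" shows "ball (xt, y) R \<subseteq> cyl Db"
proof
  fix z assume z: "z \<in> ball (xt, y) R"
  obtain x r where zz: "z = (x, r)" by (cases z)
  have "dist xt x < R" using z zz dist_fst_le[of "(xt,y)" z] by simp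
  hence "x \<in> Db" using ballsub by auto
  moreover have "dist y r < R" using z zz dist_snd_le[of "(xt,y)" z] by simp
  hence "r \<ge> 0" using assms by (simp add: dist_real_def)
  ultimately show "z \<in> cyl Db" using zz by (simp add: cyl_def)
qed

lemma cyl_borel: "cyl Db \<in> sets borel"
proof -
  have "cyl Db = (Db \<times> UNIV) \<inter> (UNIV \<times> {0..})" by (auto simp: cyl_def)
  moreover have "Db \<times> (UNIV::real set) \<in> sets borel" using Dopen by (intro borel_open open_Times) auto
  moreover have "(UNIV::'a set) \<times> {0::real..} \<in> sets borel" by (intro borel_closed closed_Times) auto
  ultimately show ?thesis by simp
qed

lemma int_in_eq: assumes "l > 0" shows "int_in Db R xt y l = exp(-l*y) * O.P l"
proof -
  have "int_in Db R xt y l = (\<integral>r. O.a (r - y) * (l * exp (- l * r)) \<partial>lborel)"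
    unfolding int_in_def
  proof (rule slice_int)
    show "ball (xt, y) R \<in> sets borel" by (rule borel_open) simp
    show "(\<lambda>r. l * exp (- l * r)) \<in> borel_measurable borel"
      by (intro borel_measurable_continuous_onI continuous_intros)
    show "\<And>r. 0 \<le> l * exp (- l * r)" using assms by simp
    show "\<And>r. emeasure lborel {x. (x, r) \<in> ball (xt, y) R} = ennreal (O.a (r - y))" by (rule em_slice_ball)
    show "\<And>r. 0 \<le> O.a (r - y)" by (rule O.a_nonneg)
    show "(\<lambda>r. O.a (r - y)) \<in> borel_measurable borel"
      by (intro borel_measurable_continuous_onI continuous_on_compose2[OF O.a_cont] continuous_intros) auto
  qed
  also have "... = exp(-l*y) * O.P l" by (rule O.Zi_shift)
  finally show ?thesis .
qed

lemma em_slice_out: assumes "y \<ge> R"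
  shows "emeasure lborel {x. (x, r) \<in> cyl Db - ball (xt, y) R} = ennreal (O.sig y r)"
proof (cases "r \<ge> 0")
  case False
  hence e: "{x. (x, r) \<in> cyl Db - ball (xt, y) R} = {}" by (auto simp: cyl_def)
  show ?thesis unfolding e using False by (simp add: O.sig_def)
next
  case True
  define B where "B = {x. (x, r) \<in> ball (xt, y) R}"
  have B: "B = ball xt (sqrt (max 0 (R\<^sup>2 - (r - y)\<^sup>2)))" unfolding B_def by (rule slice_ball)
  have BD: "B \<subseteq> Db" unfolding B using O.sqrt_le_R ballsub by (meson order_trans subset_ball)
  have eq: "{x. (x, r) \<in> cyl Db - ball (xt, y) R} = Db - B" using True by (auto simp: cyl_def B_def)
  have "emeasure lborel (Db - B) = emeasure lborel Db - emeasure lborel B"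
  proof -
    have f1: "emeasure lborel B \<noteq> \<infinity>" unfolding B
      using emeasure_lborel_ball_finite[of xt "sqrt (max 0 (R\<^sup>2 - (r - y)\<^sup>2))"] by simp
    have f2: "B \<in> sets lborel" unfolding B by (simp add: borel_open)
    have f3: "Db \<in> sets lborel" using Dopen by (simp add: borel_open)
    show ?thesis by (rule emeasure_Diff[OF f1 f3 f2 BD])
  qed
  also have "... = ennreal A - ennreal (O.a (r - y))" using emDb em_slice_ball unfolding B_def by simp
  also have "... = ennreal (A - O.a (r - y))" using O.a_nonneg by (simp add: ennreal_minus)
  finally show ?thesis unfolding eq using True by (simp add: O.sig_def)
qed

lemma sig_meas: "O.sig y \<in> borel_measurable borel"
proof -
  have "(\<lambda>r. O.a (r - y)) \<in> borel_measurable borel"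
    by (intro borel_measurable_continuous_onI continuous_on_compose2[OF O.a_cont] continuous_intros) auto
  thus ?thesis unfolding O.sig_def[abs_def] by measurable
qed

lemma out_borel: "cyl Db - ball (xt, y) R \<in> sets borel"
  by (rule sets.Diff[OF cyl_borel borel_open]) simp

lemma int_out_eq: assumes "l > 0" "y \<ge> R" shows "int_out Db R xt y l = A - exp(-l*y) * O.P l"
proof -
  have "int_out Db R xt y l = (\<integral>r. O.sig y r * (l * exp (- l * r)) \<partial>lborel)"
    unfolding int_out_def
  proof (rule slice_int)
    show "cyl Db - ball (xt, y) R \<in> sets borel" by (rule out_borel)
    show "(\<lambda>r. l * exp (- l * r)) \<in> borel_measurable borel"
      by (intro borel_measurable_continuous_onI continuous_intros)
    show "\<And>r. 0 \<le> l * exp (- l * r)" using assms by simp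
    show "\<And>r. emeasure lborel {x. (x, r) \<in> cyl Db - ball (xt, y) R} = ennreal (O.sig y r)"
      by (rule em_slice_out[OF assms(2)])
    show "\<And>r. 0 \<le> O.sig y r" by (rule O.sig_nonneg)
    show "O.sig y \<in> borel_measurable borel" by (rule sig_meas)
  qed
  also have "... = A - exp(-l*y) * O.P l" by (rule O.Zo_int(2)[OF assms(2,1)])
  finally show ?thesis .
qed

lemma rint_out_eq: assumes "l > 0" "y \<ge> R" shows "rint_out Db R xt y l = A/l - exp(-l*y) * (y * O.P l + O.Q l)"
proof -
  have "rint_out Db R xt y l = (LINT z : cyl Db - ball (xt, y) R | lborel. max 0 (snd z) * (l * exp (- l * snd z)))"
    unfolding rint_out_def
    by (rule set_lebesgue_integral_cong) (use out_borel in \<open>auto simp: cyl_def\<close>)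
  also have "... = (\<integral>r. O.sig y r * (max 0 r * (l * exp (- l * r))) \<partial>lborel)"
  proof (rule slice_int)
    show "cyl Db - ball (xt, y) R \<in> sets borel" by (rule out_borel)
    show "(\<lambda>r. max 0 r * (l * exp (- l * r))) \<in> borel_measurable borel"
      by (intro borel_measurable_continuous_onI continuous_intros)
    show "\<And>r. 0 \<le> max 0 r * (l * exp (- l * r))" using assms by simp
    show "\<And>r. emeasure lborel {x. (x, r) \<in> cyl Db - ball (xt, y) R} = ennreal (O.sig y r)"
      by (rule em_slice_out[OF assms(2)])
    show "\<And>r. 0 \<le> O.sig y r" by (rule O.sig_nonneg)
    show "O.sig y \<in> borel_measurable borel" by (rule sig_meas)
  qed
  also have "... = (\<integral>r. O.sig y r * (r * (l * exp (- l * r))) \<partial>lborel)"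
    by (rule Bochner_Integration.integral_cong) (auto simp: O.sig_def max_def)
  also have "... = A/l - exp(-l*y) * (y * O.P l + O.Q l)" by (rule O.No_int(2)[OF assms(2,1)])
  finally show ?thesis .
qed

end


theorem theorem2p2:
  fixes Db :: "'a::euclidean_space set" and R m M g E :: real and xt :: 'a
  assumes "smooth_bounded_domain Db"
    and "R > 0"
    and "inner_ball_condition Db R"
    and "\<exists>c. cball c R \<subseteq> interior (cyl Db)"
    and "m > 0" and "M > 0" and "g > 0" and "E > M * g * R"
    and "xt \<in> Db_prime Db R"
  shows "(\<exists>!l. l > 0 \<and> eq_2star Db R xt m M g E R l) \<and>
    (\<forall>ls. ls > 0 \<and> eq_2star Db R xt m M g E R ls \<and>
        M < m * (int_in Db R xt R ls / int_out Db R xt R ls) \<longrightarrow>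
      (\<exists>!p::real \<times> real. R \<le> fst p \<and> snd p > 0 \<and>
          eq_star Db R xt m M (fst p) (snd p) \<and> eq_2star Db R xt m M g E (fst p) (snd p)) \<and>
      (\<forall>y l. R \<le> y \<and> l > 0 \<and> eq_star Db R xt m M y l \<and> eq_2star Db R xt m M g E y l
          \<longrightarrow> R < y \<and> y < E / (M * g)))"
proof -
  have Dopen: "open Db" and Dbdd: "bounded Db" using assms(1) by (auto simp: smooth_bounded_domain_def)
  have ballsub: "ball xt R \<subseteq> Db"
  proof
    fix x assume x: "x \<in> ball xt R"
    have "(x, 2*R) \<in> ball (xt, 2*R) R" using x by (simp add: dist_Pair_Pair)
    moreover have "ball (xt, 2*R) R \<subseteq> cyl Db" using assms(9) assms(2) by (auto simp: Db_prime_def)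
    ultimately show "x \<in> Db" by (auto simp: cyl_def)
  qed
  interpret D: mD Db R xt using Dopen Dbdd assms(2) ballsub by unfold_locales
  define d where "d = real (DIM('a) + 1)"
  interpret S: absS D.A R m M g E d D.O.P D.O.Q
  proof
    show "D.A > 0" by (rule D.O.Apos)
    show "R > 0" "m > 0" "M > 0" "g > 0" "E > M*g*R" using assms by auto
    show "d > 0" by (simp add: d_def)
    show "\<And>l. l > 0 \<Longrightarrow> D.O.P l > 0" by (rule D.O.P_pos)
    show "continuous_on {0<..} D.O.P" by (rule D.O.contP)
    show "continuous_on {0<..} D.O.Q" by (rule D.O.contQ)
    show "\<And>l y. l > 0 \<Longrightarrow> y \<ge> R \<Longrightarrow> exp(-l*y) * D.O.P l < D.A" by (rule D.O.h1)
    show "\<And>l. l > 0 \<Longrightarrow> R * D.O.P l + D.O.Q l > 0" by (rule D.O.RPQ_pos)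
    show "\<And>\<epsilon>. \<epsilon> > 0 \<Longrightarrow> \<exists>L>0. \<forall>l\<ge>L. exp(-l*R) * D.O.P l < \<epsilon>" by (rule D.O.h3)
    show "\<And>y l1 l2. y \<ge> R \<Longrightarrow> 0 < l1 \<Longrightarrow> l1 < l2 \<Longrightarrow>
       (D.A/l2 - exp(-l2*y)*(y*D.O.P l2 + D.O.Q l2)) * (D.A - exp(-l1*y)*D.O.P l1)
       \<le> (D.A/l1 - exp(-l1*y)*(y*D.O.P l1 + D.O.Q l1)) * (D.A - exp(-l2*y)*D.O.P l2)" by (rule D.O.h4)
    show "\<And>l1 l2. 0 < l1 \<Longrightarrow> l1 \<le> l2 \<Longrightarrow> l1*(R + D.O.Q l1/D.O.P l1) \<le> l2*(R + D.O.Q l2/D.O.P l2)"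
      by (rule D.O.h5)
    show "\<And>l y. l > 0 \<Longrightarrow> y \<ge> R \<Longrightarrow> exp(-l*y)*(y*D.O.P l + D.O.Q l) \<le> D.A/l" by (rule D.O.h6)
  qed
  have tr_ratio: "int_in Db R xt y l / int_out Db R xt y l = S.Zi y l / S.Zo y l" if "R \<le> y" "l > 0" for y l
    unfolding S.Zi_def S.Zo_def using D.int_in_eq[OF that(2)] D.int_out_eq[OF that(2,1)] by simp
  have tr_star: "eq_star Db R xt m M y l \<longleftrightarrow> M = m*(S.Zi y l / S.Zo y l)" if "R \<le> y" "l > 0" for y l
    unfolding eq_star_def using tr_ratio[OF that] by simp
  have tr_2star: "eq_2star Db R xt m M g E y l \<longleftrightarrow> S.G y l = E" if "R \<le> y" "l > 0" for y l
    unfolding eq_2star_def S.G_def S.No_def S.Zo_def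
    using D.rint_out_eq[OF that(2,1)] D.int_out_eq[OF that(2,1)] by (simp add: d_def)
  have e1: "(\<lambda>l. l > 0 \<and> eq_2star Db R xt m M g E R l) = (\<lambda>l. l > 0 \<and> S.G R l = E)"
    using tr_2star[of R] by auto
  have e2: "(\<lambda>ls. ls > 0 \<and> eq_2star Db R xt m M g E R ls \<and> M < m * (int_in Db R xt R ls / int_out Db R xt R ls))
      = (\<lambda>ls. ls > 0 \<and> S.G R ls = E \<and> M < m*(S.Zi R ls / S.Zo R ls))"
  proof (rule ext)
    fix ls show "(ls > 0 \<and> eq_2star Db R xt m M g E R ls \<and> M < m * (int_in Db R xt R ls / int_out Db R xt R ls))
      = (ls > 0 \<and> S.G R ls = E \<and> M < m*(S.Zi R ls / S.Zo R ls))"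
    proof (cases "ls > 0")
      case True
      show ?thesis by (simp only: tr_ratio[OF order_refl True] tr_2star[OF order_refl True])
    qed simp
  qed
  have e3: "(\<lambda>p::real\<times>real. R \<le> fst p \<and> snd p > 0 \<and> eq_star Db R xt m M (fst p) (snd p) \<and> eq_2star Db R xt m M g E (fst p) (snd p))
      = (\<lambda>p. R \<le> fst p \<and> snd p > 0 \<and> M = m*(S.Zi (fst p) (snd p) / S.Zo (fst p) (snd p)) \<and> S.G (fst p) (snd p) = E)"
  proof (rule ext)
    fix p :: "real \<times> real"
    show "(R \<le> fst p \<and> snd p > 0 \<and> eq_star Db R xt m M (fst p) (snd p) \<and> eq_2star Db R xt m M g E (fst p) (snd p))
      = (R \<le> fst p \<and> snd p > 0 \<and> M = m*(S.Zi (fst p) (snd p) / S.Zo (fst p) (snd p)) \<and> S.G (fst p) (snd p) = E)"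
    proof (cases "R \<le> fst p \<and> snd p > 0")
      case True
      show ?thesis using True by (simp only: tr_star[OF conjunct1[OF True] conjunct2[OF True]] tr_2star[OF conjunct1[OF True] conjunct2[OF True]])
    next
      case False thus ?thesis by blast
    qed
  qed
  have e4: "(R \<le> y \<and> l > 0 \<and> eq_star Db R xt m M y l \<and> eq_2star Db R xt m M g E y l) \<longleftrightarrow>
      (R \<le> y \<and> l > 0 \<and> M = m*(S.Zi y l / S.Zo y l) \<and> S.G y l = E)" for y l
    using fun_cong[OF e3, of "(y,l)"] by simp
  have main: "(\<exists>!l. l > 0 \<and> S.G R l = E) \<and>
   (\<forall>ls. ls > 0 \<and> S.G R ls = E \<and> M < m*(S.Zi R ls / S.Zo R ls) \<longrightarrow>
     (\<exists>!p::real\<times>real. R \<le> fst p \<and> snd p > 0 \<and> M = m*(S.Zi (fst p) (snd p) / S.Zo (fst p) (snd p)) \<and> S.G (fst p) (snd p) = E) \<and>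
     (\<forall>y l. R \<le> y \<and> l > 0 \<and> M = m*(S.Zi y l / S.Zo y l) \<and> S.G y l = E \<longrightarrow> R < y \<and> y < E/(M*g)))"
    by (rule S.abs_main)
  have m1: "\<exists>!l. l > 0 \<and> eq_2star Db R xt m M g E R l" unfolding e1 using main by (rule conjunct1)
  have m2: "\<forall>ls. ls > 0 \<and> S.G R ls = E \<and> M < m*(S.Zi R ls / S.Zo R ls) \<longrightarrow>
     (\<exists>!p::real\<times>real. R \<le> fst p \<and> snd p > 0 \<and> M = m*(S.Zi (fst p) (snd p) / S.Zo (fst p) (snd p)) \<and> S.G (fst p) (snd p) = E) \<and>
     (\<forall>y l. R \<le> y \<and> l > 0 \<and> M = m*(S.Zi y l / S.Zo y l) \<and> S.G y l = E \<longrightarrow> R < y \<and> y < E/(M*g))"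
    using main by (rule conjunct2)
  show ?thesis
  proof (rule conjI[OF m1], intro allI impI)
    fix ls assume H: "ls > 0 \<and> eq_2star Db R xt m M g E R ls \<and> M < m * (int_in Db R xt R ls / int_out Db R xt R ls)"
    have H': "ls > 0 \<and> S.G R ls = E \<and> M < m*(S.Zi R ls / S.Zo R ls)"
      using H unfolding fun_cong[OF e2, of ls] .
    have ab: "(\<exists>!p::real\<times>real. R \<le> fst p \<and> snd p > 0 \<and> M = m*(S.Zi (fst p) (snd p) / S.Zo (fst p) (snd p)) \<and> S.G (fst p) (snd p) = E) \<and>
     (\<forall>y l. R \<le> y \<and> l > 0 \<and> M = m*(S.Zi y l / S.Zo y l) \<and> S.G y l = E \<longrightarrow> R < y \<and> y < E/(M*g))"
      by (rule mp[OF spec[OF m2, of ls] H'])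
    show "(\<exists>!p::real \<times> real. R \<le> fst p \<and> snd p > 0 \<and>
          eq_star Db R xt m M (fst p) (snd p) \<and> eq_2star Db R xt m M g E (fst p) (snd p)) \<and>
      (\<forall>y l. R \<le> y \<and> l > 0 \<and> eq_star Db R xt m M y l \<and> eq_2star Db R xt m M g E y l
          \<longrightarrow> R < y \<and> y < E / (M * g))"
      unfolding e3 e4 using ab .
  qed
qed


end
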